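(* Let $n$ be even, $k\ge 2$. A function $f(x)=a_0(x)+2a_1(x)+\cdots+2^{k-1}a_{k-1}(x)$ from $\mathbb{V}_n$ to $\mathbb{Z}_{2^k}$ (with Boolean $a_j$) is gbent if and only if $\mathcal{A}=a_{k-1}\oplus\langle a_0,a_1,\ldots,a_{k-2}\rangle$ is an affine space consisting of bent functions such that for every pairwise distinct $g_i,g_j,g_l\in\mathcal{A}$ the function $g_ig_j\oplus g_ig_l\oplus g_jg_l$ is bent.
   Context: $\mathbb{V}_n$ is an $n$-dimensional $\mathbb{F}_2$-vector space with inner product $u\cdot x$. A Boolean $g$ is bent if $|\sum_x(-1)^{g(x)\oplus u\cdot x}|=2^{n/2}$ for all $u$. $\langle\cdot\rangle$ denotes $\mathbb{F}_2$-span of Boolean functions and $a\oplus L=\{a\oplus h:h\in L\}$. $f$ is gbent if $|\sum_x\zeta_{2^k}^{f(x)}(-1)^{u\cdot x}|=2^{n/2}$ for all $u$, where $\zeta_{2^k}=e^{2\pi i/2^k}$. *)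

theory Defs
  imports Complex_Main
begin

definition Vn :: "nat \<Rightarrow> (nat \<Rightarrow> bool) set" where
  "Vn n = {x. \<forall>i\<ge>n. \<not> x i}"

definition ip :: "nat \<Rightarrow> (nat \<Rightarrow> bool) \<Rightarrow> (nat \<Rightarrow> bool) \<Rightarrow> bool" where
  "ip n u x = odd (card {i. i < n \<and> u i \<and> x i})"

definition bent :: "nat \<Rightarrow> ((nat \<Rightarrow> bool) \<Rightarrow> bool) \<Rightarrow> bool" where
  "bent n g \<longleftrightarrow> (\<forall>u\<in>Vn n.
     \<bar>\<Sum>x\<in>Vn n. (-1::real) ^ of_bool (g x \<noteq> ip n u x)\<bar> = 2 powr (real n / 2))"

text \<open>A function f from V_n to Z_{2^k} (values taken as naturals, read mod 2^k) is gbent.\<close>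
definition gbent :: "nat \<Rightarrow> nat \<Rightarrow> ((nat \<Rightarrow> bool) \<Rightarrow> nat) \<Rightarrow> bool" where
  "gbent n k f \<longleftrightarrow> (\<forall>u\<in>Vn n.
     cmod (\<Sum>x\<in>Vn n. cis (2 * pi * real (f x) / 2 ^ k) * (-1) ^ of_bool (ip n u x))
       = 2 powr (real n / 2))"

text \<open>Restriction of a Boolean function to V_n (so that equality of functions means
  equality on V_n).\<close>
definition restrV :: "nat \<Rightarrow> ((nat \<Rightarrow> bool) \<Rightarrow> bool) \<Rightarrow> (nat \<Rightarrow> bool) \<Rightarrow> bool" where
  "restrV n g = (\<lambda>x. if x \<in> Vn n then g x else False)"

definition span2 :: "nat \<Rightarrow> (nat \<Rightarrow> (nat \<Rightarrow> bool) \<Rightarrow> bool) \<Rightarrow> nat set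
                     \<Rightarrow> ((nat \<Rightarrow> bool) \<Rightarrow> bool) set" where
  "span2 n a J = {restrV n (\<lambda>x. odd (card {j\<in>S. a j x})) | S. S \<subseteq> J}"

definition xor_coset :: "nat \<Rightarrow> ((nat \<Rightarrow> bool) \<Rightarrow> bool) \<Rightarrow> ((nat \<Rightarrow> bool) \<Rightarrow> bool) set
                         \<Rightarrow> ((nat \<Rightarrow> bool) \<Rightarrow> bool) set" where
  "xor_coset n b L = {restrV n (\<lambda>x. b x \<noteq> h x) | h. h \<in> L}"

end

theory Submission
  imports Defs "HOL-Computational_Algebra.Polynomial"
begin

lemma finite_Vn: "finite (Vn n)"
proof -
  have "Vn n \<subseteq> (\<lambda>S i. i \<in> S) ` Pow {..<n}"
  proof
    fix x assume x: "x \<in> Vn n"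
    have "x = (\<lambda>i. i \<in> {i. i < n \<and> x i})"
      using x by (auto simp: Vn_def fun_eq_iff) (meson not_less)
    thus "x \<in> (\<lambda>S i. i \<in> S) ` Pow {..<n}" by blast
  qed
  thus ?thesis by (rule finite_subset) simp
qed

definition sY :: "nat set \<Rightarrow> nat" where "sY Y = (\<Sum>i\<in>Y. 2^i)"

lemma sY_split:
  assumes "Y \<subseteq> {..<Suc m}"
  shows "sY Y = sY (Y \<inter> {..<m}) + (if m \<in> Y then 2^m else 0)"
proof -
  have fin: "finite Y" using assms finite_subset by blast
  have Y: "Y = (Y \<inter> {..<m}) \<union> (Y \<inter> {m})" using assms by auto
  have "sY Y = sY (Y \<inter> {..<m}) + (\<Sum>i\<in>Y \<inter> {m}. 2^i)"
    unfolding sY_def by (subst Y, rule sum.union_disjoint) (use fin in auto)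
  thus ?thesis by (cases "m \<in> Y") auto
qed

lemma sY_less: "Y \<subseteq> {..<m} \<Longrightarrow> sY Y < 2^m"
proof (induct m arbitrary: Y)
  case 0 then show ?case by (simp add: sY_def)
next
  case (Suc m)
  have "sY (Y \<inter> {..<m}) < 2^m" by (rule Suc(1)) auto
  thus ?case using sY_split[OF Suc(2)] by auto
qed

lemma sY_inj: "Y \<subseteq> {..<m} \<Longrightarrow> Z \<subseteq> {..<m} \<Longrightarrow> sY Y = sY Z \<Longrightarrow> Y = Z"
proof (induct m arbitrary: Y Z)
  case 0 then show ?case by auto
next
  case (Suc m)
  have a: "sY (Y \<inter> {..<m}) < 2^m" "sY (Z \<inter> {..<m}) < 2^m" by (auto intro: sY_less)
  have eq: "sY (Y \<inter> {..<m}) + (if m \<in> Y then 2^m else 0) = sY (Z \<inter> {..<m}) + (if m \<in> Z then 2^m else 0)"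
    using Suc(4) sY_split[OF Suc(2)] sY_split[OF Suc(3)] by simp
  have mm: "m \<in> Y \<longleftrightarrow> m \<in> Z" using eq a by (auto split: if_splits)
  hence "sY (Y \<inter> {..<m}) = sY (Z \<inter> {..<m})" using eq by (auto split: if_splits)
  hence "Y \<inter> {..<m} = Z \<inter> {..<m}" by (intro Suc(1)) auto
  have Y: "Y = (Y \<inter> {..<m}) \<union> (Y \<inter> {m})" and Z: "Z = (Z \<inter> {..<m}) \<union> (Z \<inter> {m})"
    using Suc(2,3) by auto
  have "Y \<inter> {m} = Z \<inter> {m}" using mm by auto
  thus ?case using Y Z \<open>Y \<inter> {..<m} = Z \<inter> {..<m}\<close> by metis
qed

definition sd :: "'a set \<Rightarrow> 'a set \<Rightarrow> 'a set" where "sd A B = (A - B) \<union> (B - A)"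

lemma card_sd: assumes "finite A" "finite B"
  shows "card A + card B = card (sd A B) + 2 * card (A \<inter> B)"
proof -
  have 1: "card A = card (A - B) + card (A \<inter> B)"
    using card_Int_Diff[of A B] assms by simp
  have 2: "card B = card (B - A) + card (A \<inter> B)"
    using card_Int_Diff[of B A] assms by (simp add: Int_commute)
  have 3: "card (sd A B) = card (A - B) + card (B - A)"
    unfolding sd_def using assms by (intro card_Un_disjoint) auto
  show ?thesis using 1 2 3 by simp
qed

lemma odd_card_sd: "finite A \<Longrightarrow> finite B \<Longrightarrow> odd (card (sd A B)) \<longleftrightarrow> (odd (card A) \<noteq> odd (card B))"
  using card_sd[of A B] by (metis even_add even_mult_iff even_numeral)

lemma neg1_card_sd: "finite A \<Longrightarrow> finite B \<Longrightarrow> (-1::int) ^ card (sd A B) = (-1) ^ card A * (-1) ^ card B"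
  using odd_card_sd[of A B] by (simp add: minus_one_power_iff)

definition chi :: "nat set \<Rightarrow> nat set \<Rightarrow> int" where "chi S Y = (-1) ^ card (S \<inter> Y)"

lemma sd_Int: "sd A B \<inter> C = sd (A \<inter> C) (B \<inter> C)" "C \<inter> sd A B = sd (C \<inter> A) (C \<inter> B)"
  by (auto simp: sd_def)

lemma chi_sd_left: assumes "finite S" "finite T" shows "chi (sd S T) Y = chi S Y * chi T Y"
  unfolding chi_def sd_Int using assms by (intro neg1_card_sd) auto

lemma chi_sd_right: assumes "finite S" shows "chi S (sd Y Z) = chi S Y * chi S Z"
  unfolding chi_def sd_Int using assms by (intro neg1_card_sd) auto

lemma chi_sq: "chi S Y * chi S Y = 1"
  by (simp add: chi_def power_mult_distrib[symmetric])

lemma chi_pm: "chi S Y = 1 \<or> chi S Y = -1"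
  by (simp add: chi_def minus_one_power_iff)

lemma sum_Pow_neg1:
  assumes "finite A" "D \<subseteq> A"
  shows "(\<Sum>S\<in>Pow A. (-1::int) ^ card (S \<inter> D)) = (if D = {} then 2 ^ card A else 0)"
  using assms
proof (induct A arbitrary: D rule: finite_induct)
  case empty then show ?case by simp
next
  case (insert a A)
  have disj: "Pow A \<inter> insert a ` Pow A = {}" using insert(2) by auto
  have inj: "inj_on (insert a) (Pow A)"
  proof (rule inj_onI)
    fix S T assume S: "S \<in> Pow A" and T: "T \<in> Pow A" and e: "insert a S = insert a T"
    have "a \<notin> S" "a \<notin> T" using S T insert(2) by auto
    hence "S = insert a S - {a}" "T = insert a T - {a}" by auto
    thus "S = T" using e by simp
  qed
  have "(\<Sum>S\<in>Pow (insert a A). (-1::int) ^ card (S \<inter> D))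
      = (\<Sum>S\<in>Pow A. (-1::int) ^ card (S \<inter> D)) + (\<Sum>S\<in>insert a ` Pow A. (-1::int) ^ card (S \<inter> D))"
    unfolding Pow_insert using disj insert(1) by (intro sum.union_disjoint) auto
  also have "(\<Sum>S\<in>insert a ` Pow A. (-1::int) ^ card (S \<inter> D)) = (\<Sum>S\<in>Pow A. (-1::int) ^ card (insert a S \<inter> D))"
    using inj by (simp add: sum.reindex)
  finally have eq: "(\<Sum>S\<in>Pow (insert a A). (-1::int) ^ card (S \<inter> D))
      = (\<Sum>S\<in>Pow A. (-1::int) ^ card (S \<inter> D)) + (\<Sum>S\<in>Pow A. (-1::int) ^ card (insert a S \<inter> D))" .
  show ?case
  proof (cases "a \<in> D")
    case True
    have "(-1::int) ^ card (insert a S \<inter> D) = - ((-1) ^ card (S \<inter> D))" if "S \<in> Pow A" for S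
    proof -
      have "a \<notin> S \<inter> D" using that insert(2) by auto
      moreover have "insert a S \<inter> D = insert a (S \<inter> D)" using True by auto
      moreover have "finite (S \<inter> D)" using that insert(1) finite_subset by auto
      ultimately show ?thesis by simp
    qed
    hence "(\<Sum>S\<in>Pow A. (-1::int) ^ card (insert a S \<inter> D)) = - (\<Sum>S\<in>Pow A. (-1::int) ^ card (S \<inter> D))"
      by (simp add: sum_negf)
    thus ?thesis using eq True by auto
  next
    case False
    hence DA: "D \<subseteq> A" using insert(4) by auto
    have "insert a S \<inter> D = S \<inter> D" for S using False by auto
    hence "(\<Sum>S\<in>Pow (insert a A). (-1::int) ^ card (S \<inter> D)) = 2 * (\<Sum>S\<in>Pow A. (-1::int) ^ card (S \<inter> D))"
      using eq by simp
    also have "... = (if D = {} then 2 ^ card (insert a A) else 0)"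
      using insert(3)[OF DA] insert(1,2) by simp
    finally show ?thesis .
  qed
qed

lemma chi_orth:
  assumes "Y \<subseteq> {..<m}" "Z \<subseteq> {..<m}"
  shows "(\<Sum>S\<in>Pow {..<m}. chi S Y * chi S Z) = (if Y = Z then 2^m else 0)"
proof -
  have "(\<Sum>S\<in>Pow {..<m}. chi S Y * chi S Z) = (\<Sum>S\<in>Pow {..<m}. (-1::int) ^ card (S \<inter> sd Y Z))"
  proof (intro sum.cong refl)
    fix S assume "S \<in> Pow {..<m}"
    hence "finite S" by (auto intro: finite_subset)
    thus "chi S Y * chi S Z = (-1)^card (S \<inter> sd Y Z)" using chi_sd_right[of S Y Z] by (simp add: chi_def)
  qed
  also have "... = (if sd Y Z = {} then 2 ^ card {..<m} else 0)"
    using assms by (intro sum_Pow_neg1) (auto simp: sd_def)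
  also have "sd Y Z = {} \<longleftrightarrow> Y = Z" by (auto simp: sd_def)
  finally show ?thesis by simp
qed

definition zeta :: "nat \<Rightarrow> complex" where "zeta m = cis (pi / 2^m)"
definition Ep :: "nat \<Rightarrow> int poly" where "Ep m = 1 + monom 1 (2^m)"
definition evz :: "complex \<Rightarrow> int poly \<Rightarrow> complex" where "evz z p = poly (map_poly of_int p) z"
abbreviation ev :: "nat \<Rightarrow> int poly \<Rightarrow> complex" where "ev m p \<equiv> evz (zeta m) p"

lemma map_poly_of_int_add: "map_poly (of_int :: int \<Rightarrow> 'a::comm_ring_1) (p + q) = map_poly of_int p + map_poly of_int q"
  by (rule poly_eqI) (simp add: coeff_map_poly)

lemma map_poly_of_int_smult: "map_poly (of_int :: int \<Rightarrow> 'a::comm_ring_1) (smult a q) = smult (of_int a) (map_poly of_int q)"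
  by (rule poly_eqI) (simp add: coeff_map_poly)

lemma map_poly_of_int_mult: "map_poly (of_int :: int \<Rightarrow> 'a::comm_ring_1) (p * q) = map_poly of_int p * map_poly of_int q"
  by (induct p) (simp_all add: map_poly_pCons map_poly_of_int_add map_poly_of_int_smult)

lemma evz_add[simp]: "evz z (p + q) = evz z p + evz z q"
  by (simp add: evz_def map_poly_of_int_add)
lemma evz_mult[simp]: "evz z (p * q) = evz z p * evz z q"
  by (simp add: evz_def map_poly_of_int_mult)
lemma evz_diff[simp]: "evz z (p - q) = evz z p - evz z q"
  using evz_add[of z "p - q" q] by simp
lemma evz_const[simp]: "evz z [:c:] = of_int c"
  by (cases "c = 0") (simp_all add: evz_def map_poly_pCons)
lemma evz_1[simp]: "evz z 1 = 1"
  by (simp add: evz_def)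
lemma evz_0[simp]: "evz z 0 = 0"
  by (simp add: evz_def)
lemma evz_uminus[simp]: "evz z (- p) = - evz z p"
  using evz_add[of z "- p" p] by (simp add: eq_neg_iff_add_eq_0)
lemma evz_monom[simp]: "evz z (monom c j) = of_int c * z ^ j"
  by (simp add: evz_def map_poly_monom poly_monom)
lemma evz_pow[simp]: "evz z (p ^ j) = evz z p ^ j"
  by (induct j) simp_all
lemma evz_smult[simp]: "evz z (smult c p) = of_int c * evz z p"
  by (simp add: evz_def map_poly_of_int_smult)
lemma evz_pCons[simp]: "evz z (pCons a p) = of_int a + z * evz z p"
  by (cases "a = 0 \<and> p = 0") (auto simp: evz_def map_poly_pCons)
lemma evz_numeral[simp]: "evz z (numeral w) = numeral w"
  by (metis evz_const of_int_numeral of_int_poly)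
lemma evz_sum: "evz z (sum f A) = (\<Sum>i\<in>A. evz z (f i))"
  by (induct A rule: infinite_finite_induct) simp_all
lemma evz_pcompose: "evz z (pcompose p q) = evz (evz z q) p"
  by (induct p) (simp_all add: pcompose_pCons)
lemma evz_cnj: "cnj (evz z p) = evz (cnj z) p"
  by (induct p) simp_all

lemma zeta_pow: "zeta m ^ j = cis (real j * pi / 2^m)"
  by (simp add: zeta_def DeMoivre)

lemma zeta_M: "zeta m ^ (2^m) = -1"
  by (simp add: zeta_pow)

lemma evz_Ep: "evz z (Ep m) = 1 + z ^ (2^m)"
  by (simp add: Ep_def)

lemma ev_Ep: "ev m (Ep m) = 0"
  by (simp add: Ep_def zeta_M)


lemma frob:
  fixes c :: int
  assumes "odd c"
  shows "\<exists>B. [:1, c:] ^ (2^j) = 1 + monom 1 (2^j) + smult 2 B"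
proof (induct j)
  case 0
  obtain d where d: "c = 2 * d + 1" using assms oddE by blast
  have "[:1, c:] = 1 + monom 1 (2^0) + smult 2 [:0, d:]"
    by (rule poly_eqI) (auto simp: d coeff_monom coeff_pCons split: nat.split)
  then show ?case by (intro exI[of _ "[:0,d:]"]) (simp only: power_0 power_one_right)
next
  case (Suc j)
  then obtain B where B: "[:1, c:] ^ (2^j) = 1 + monom 1 (2^j) + smult 2 B" by blast
  have "[:1, c:] ^ (2^Suc j) = ([:1, c:] ^ (2^j))^2"
    by (simp add: power_mult[symmetric] mult.commute)
  also have "... = (1 + monom 1 (2^j) + 2 * B)^2"
    unfolding B by (simp add: numeral_mult_conv_smult)
  also have "... = 1 + monom 1 (2^j) * monom 1 (2^j) + 2 * (monom 1 (2^j) + 2 * B + 2 * monom 1 (2^j) * B + 2 * B * B)"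
    by (simp add: power2_eq_square algebra_simps)
  also have "monom 1 (2^j) * monom 1 (2^j) = (monom 1 (2^Suc j) :: int poly)"
    by (simp add: mult_monom mult_2)
  finally show ?case by (auto simp: numeral_mult_conv_smult)
qed

lemma eis_core:
  fixes P Q C :: "int poly"
  assumes PQ: "P * Q = monom 1 N + smult 2 C" and c0: "coeff (P * Q) 0 = 2"
    and dN: "degree (P * Q) = N"
    and dP: "degree P \<ge> 1" and dQ: "degree Q \<ge> 1"
  shows False
proof -
  have nz: "P * Q \<noteq> 0" using c0 by auto
  hence P0: "P \<noteq> 0" and Q0: "Q \<noteq> 0" by auto
  have coeffPQ: "coeff (P * Q) i = (if i = N then 1 else 0) + 2 * coeff C i" for i
    by (simp add: PQ coeff_monom)
  have dPQ: "degree (P * Q) = degree P + degree Q" using P0 Q0 by (rule degree_mult_eq)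
  have lc: "lead_coeff (P * Q) = lead_coeff P * lead_coeff Q" by (rule lead_coeff_mult)
  have "odd (lead_coeff (P*Q))" using dN by (simp add: coeffPQ)
  have oP: "odd (lead_coeff P)" and oQ: "odd (lead_coeff Q)"
    using \<open>odd (lead_coeff (P*Q))\<close> lc by auto
  define a where "a = (LEAST i. odd (coeff P i))"
  define b where "b = (LEAST i. odd (coeff Q i))"
  have oa: "odd (coeff P a)" unfolding a_def by (rule LeastI[of _ "degree P"]) (rule oP)
  have ob: "odd (coeff Q b)" unfolding b_def by (rule LeastI[of _ "degree Q"]) (rule oQ)
  have ea: "i < a \<Longrightarrow> even (coeff P i)" for i unfolding a_def using not_less_Least by blast
  have eb: "i < b \<Longrightarrow> even (coeff Q i)" for i unfolding b_def using not_less_Least by blast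
  have aP: "a \<le> degree P" unfolding a_def by (rule Least_le) (rule oP)
  have bQ: "b \<le> degree Q" unfolding b_def by (rule Least_le) (rule oQ)
  have "coeff (P * Q) (a + b) = (\<Sum>i\<le>a+b. coeff P i * coeff Q (a + b - i))"
    by (rule coeff_mult)
  also have "... = coeff P a * coeff Q b + (\<Sum>i\<in>{..a+b} - {a}. coeff P i * coeff Q (a + b - i))"
    by (subst sum.remove[of _ a]) auto
  finally have eq: "coeff (P * Q) (a + b) = coeff P a * coeff Q b + (\<Sum>i\<in>{..a+b} - {a}. coeff P i * coeff Q (a + b - i))" .
  have "even (\<Sum>i\<in>{..a+b} - {a}. coeff P i * coeff Q (a + b - i))"
  proof (rule dvd_sum)
    fix i assume i: "i \<in> {..a+b} - {a}"
    show "even (coeff P i * coeff Q (a + b - i))"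
    proof (cases "i < a")
      case True then show ?thesis using ea by auto
    next
      case False
      with i have "a + b - i < b" by auto
      then show ?thesis using eb by auto
    qed
  qed
  with eq oa ob have "odd (coeff (P * Q) (a + b))" by auto
  hence "a + b = N" by (simp add: coeffPQ split: if_splits)
  with dN dPQ aP bQ have "a = degree P" "b = degree Q" by auto
  with dP dQ have "even (coeff P 0)" "even (coeff Q 0)" using ea eb by auto
  moreover have "coeff (P * Q) 0 = coeff P 0 * coeff Q 0" by (simp add: coeff_mult)
  ultimately have "4 dvd coeff (P * Q) 0" by (auto elim!: evenE)
  with c0 show False by simp
qed


lemma degree_Ep: "degree (Ep m) = 2^m"
  unfolding Ep_def by (subst degree_add_eq_right) (auto simp: degree_monom_eq)

lemma lc_Ep: "lead_coeff (Ep m) = 1"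
  by (simp add: degree_Ep) (simp add: Ep_def coeff_monom)

lemma Ep_ne0: "Ep m \<noteq> 0"
  using lc_Ep[of m] by auto

lemma poly_Ep1: "poly (Ep m) 1 = 2"
  by (simp add: Ep_def poly_monom)

lemma pcompose_pow: "pcompose (p ^ j) q = (pcompose p q) ^ j"
  by (induct j) (simp_all add: pcompose_mult pcompose_1)

lemma shift_Ep: "\<exists>C. pcompose (Ep m) [:1,1:] = monom 1 (2^m) + smult 2 C"
proof -
  obtain B where B: "[:1, 1::int:] ^ (2^m) = 1 + monom 1 (2^m) + smult 2 B"
    using frob[of 1 m] by auto
  have "pcompose (Ep m) [:1,1:] = 1 + [:1,1::int:] ^ (2^m)"
    by (simp add: Ep_def pcompose_add pcompose_1 monom_altdef pcompose_pow pcompose_pCons)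
  also have "... = monom 1 (2^m) + smult 2 (1 + B)"
  proof -
    have two: "(2::int poly) = [:2:]" by (metis of_int_numeral of_int_poly)
    show ?thesis unfolding B by (simp add: algebra_simps smult_add_right) (simp add: numeral_mult_conv_smult[symmetric] two)
  qed
  finally show ?thesis by blast
qed

lemma Ep_irred: assumes "A * B = Ep m" shows "degree A = 0 \<or> degree B = 0"
proof (rule ccontr)
  assume "\<not> (degree A = 0 \<or> degree B = 0)"
  hence dA: "degree A \<ge> 1" and dB: "degree B \<ge> 1" by auto
  obtain C where C: "pcompose (Ep m) [:1,1:] = monom 1 (2^m) + smult 2 C" using shift_Ep by blast
  define P where "P = pcompose A [:1,1:]"
  define Q where "Q = pcompose B [:1,1:]"
  have PQ: "P * Q = pcompose (Ep m) [:1,1:]" unfolding P_def Q_def assms[symmetric] by (simp add: pcompose_mult)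
  show False
  proof (rule eis_core[of P Q "2^m" C])
    show "P * Q = monom 1 (2^m) + smult 2 C" using PQ C by simp
    show "coeff (P * Q) 0 = 2" unfolding PQ by (simp add: pcompose_coeff_0 poly_Ep1)
    show "degree (P * Q) = 2^m" unfolding PQ by (simp add: degree_pcompose degree_Ep)
    show "degree P \<ge> 1" using dA by (simp add: P_def degree_pcompose)
    show "degree Q \<ge> 1" using dB by (simp add: Q_def degree_pcompose)
  qed
qed

lemma ev_zero_deg:
  assumes "p \<noteq> 0" "ev m p = 0"
  shows "2^m \<le> degree p"
proof -
  define Pr where "Pr = (\<lambda>d. \<exists>q. q \<noteq> 0 \<and> ev m q = 0 \<and> degree q = d)"
  have "Pr (degree p)" using assms unfolding Pr_def by blast
  define d0 where "d0 = (LEAST d. Pr d)"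
  have "Pr d0" unfolding d0_def by (rule LeastI) fact
  then obtain R where R: "R \<noteq> 0" "ev m R = 0" "degree R = d0" unfolding Pr_def by blast
  have minim: "q \<noteq> 0 \<Longrightarrow> ev m q = 0 \<Longrightarrow> d0 \<le> degree q" for q
    unfolding d0_def by (rule Least_le) (auto simp: Pr_def)
  have dp: "d0 \<le> degree p" using minim assms by blast
  define R' where "R' = primitive_part R"
  have Rdec: "R = smult (content R) R'" unfolding R'_def by simp
  have cR: "content R \<noteq> 0" using R by simp
  have evR': "ev m R' = 0" using R(2) cR by (subst (asm) Rdec) simp
  have R'0: "R' \<noteq> 0" using R by (simp add: R'_def)
  have dR': "degree R' = d0" using R by (simp add: R'_def)
  have cR': "content R' = 1" using R by (simp add: R'_def)
  obtain q r where qr: "pseudo_divmod (Ep m) R' = (q, r)" by (cases "pseudo_divmod (Ep m) R'") auto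
  define c where "c = lead_coeff R' ^ (Suc (degree (Ep m)) - degree R')"
  have eq: "smult c (Ep m) = R' * q + r" and rdeg: "r = 0 \<or> degree r < degree R'"
    using pseudo_divmod[OF R'0 qr] by (simp_all add: c_def)
  have c0: "c \<noteq> 0" using R'0 by (simp add: c_def)
  have "ev m r = 0"
    using arg_cong[OF eq, of "ev m"] by (simp add: ev_Ep evR')
  hence r0: "r = 0" using rdeg minim dR' by fastforce
  have eq2: "smult c (Ep m) = R' * q" using eq r0 by simp
  have cEp: "content (Ep m) = 1"
  proof -
    have "content (Ep m) dvd coeff (Ep m) 0" by simp
    hence "content (Ep m) dvd 1" by (simp add: Ep_def coeff_monom)
    thus ?thesis using is_unit_content_iff by blast
  qed
  have "content (smult c (Ep m)) = content (R' * q)" using eq2 by simp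
  hence cq: "content q = \<bar>c\<bar>" by (simp add: content_mult cR' cEp)
  have "smult c (Ep m) = smult c (smult (sgn c) (R' * primitive_part q))"
  proof -
    have "R' * q = R' * smult (content q) (primitive_part q)" by simp
    also have "... = smult (c * sgn c) (R' * primitive_part q)"
      by (simp add: cq abs_if sgn_if)
    finally show ?thesis using eq2 by simp
  qed
  hence "Ep m = smult (sgn c) (R' * primitive_part q)" using c0 by (rule smult_cancel[rotated])
  hence EF: "Ep m = R' * smult (sgn c) (primitive_part q)" by simp
  from Ep_irred[OF this[symmetric]] show ?thesis
  proof
    assume "degree R' = 0"
    then obtain r0 where "R' = [:r0:]" by (metis degree_eq_zeroE)
    with evR' R'0 show ?thesis by simp
  next
    assume d: "degree (smult (sgn c) (primitive_part q)) = 0"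
    have "smult (sgn c) (primitive_part q) \<noteq> 0" using EF Ep_ne0 by auto
    hence "degree (Ep m) = degree R'"
      using EF R'0 d by (simp add: degree_mult_eq)
    thus ?thesis using dR' dp by (simp add: degree_Ep)
  qed
qed

lemma ev_zero_iff: "ev m p = 0 \<longleftrightarrow> Ep m dvd p"
proof
  assume "Ep m dvd p" then show "ev m p = 0" by (auto simp: ev_Ep)
next
  assume ev0: "ev m p = 0"
  obtain q r where qr: "pseudo_divmod p (Ep m) = (q, r)" by (cases "pseudo_divmod p (Ep m)") auto
  have eq: "smult (lead_coeff (Ep m) ^ (Suc (degree p) - degree (Ep m))) p = Ep m * q + r"
    and rdeg: "r = 0 \<or> degree r < degree (Ep m)"
    using pseudo_divmod[OF Ep_ne0 qr] by simp_all
  have eq': "p = Ep m * q + r" using eq by (simp add: lc_Ep)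
  have "ev m r = 0" using arg_cong[OF eq', of "ev m"] ev0 by (simp add: ev_Ep)
  hence "r = 0" using rdeg ev_zero_deg[of r m] by (fastforce simp: degree_Ep)
  with eq' show "Ep m dvd p" by simp
qed


lemma zeta_cnj_mult: "cnj (zeta m) * zeta m = 1"
  by (simp add: zeta_def cis_cnj cis_mult)

lemma zeta_2M: "zeta m ^ (2 * 2^m) = 1"
proof -
  have "zeta m ^ (2 * 2^m) = (zeta m ^ (2^m))^2" by (simp add: power_mult[symmetric] mult.commute)
  thus ?thesis by (simp add: zeta_M)
qed

lemma cnj_zeta: "cnj (zeta m) = zeta m ^ (2 * 2^m - 1)"
proof -
  have s: "Suc (2 * 2^m - 1) = 2 * 2^m" by simp
  have e: "zeta m ^ (2 * 2^m - 1) * zeta m = 1"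
  proof -
    have "zeta m ^ (2 * 2^m - 1) * zeta m = zeta m ^ Suc (2 * 2^m - 1)" by (simp only: power_Suc2)
    also have "... = 1" by (simp only: s zeta_2M)
    finally show ?thesis .
  qed
  have "cnj (zeta m) = cnj (zeta m) * (zeta m ^ (2 * 2^m - 1) * zeta m)" by (simp only: e mult_1_right)
  also have "... = zeta m ^ (2 * 2^m - 1) * (cnj (zeta m) * zeta m)" by (simp only: ac_simps)
  finally show ?thesis by (simp add: zeta_cnj_mult)
qed

lemma cnj_zeta_pow: "cnj (zeta m ^ t) = (zeta m ^ t) ^ (2 * 2^m - 1)"
  by (simp add: cnj_zeta power_mult[symmetric] mult.commute)

lemma ev_conj: "cnj (ev m p) = ev m (pcompose p (monom 1 (2 * 2^m - 1)))"
  by (simp add: evz_cnj evz_pcompose cnj_zeta)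

lemma ev_pi: "ev m [:1, -1:] = 1 - zeta m"
  by simp

lemma two_eq: "2 = (1 - zeta m) * ev m (\<Sum>i<2^m. monom 1 i)"
proof -
  have "(1 - zeta m) * ev m (\<Sum>i<2^m. monom 1 i) = (1 - zeta m) * (\<Sum>i<2^m. zeta m ^ i)"
    by (simp add: evz_sum)
  also have "... = 1 - zeta m ^ (2^m)" by (simp add: one_diff_power_eq)
  finally show ?thesis by (simp add: zeta_M)
qed

lemma pi_dvd_iff: "(\<exists>q. ev m p = (1 - zeta m) * ev m q) \<longleftrightarrow> even (poly p 1)"
proof
  assume "\<exists>q. ev m p = (1 - zeta m) * ev m q"
  then obtain q where q: "ev m p = (1 - zeta m) * ev m q" by blast
  have "ev m (p - [:1,-1:] * q) = 0" using q by (simp add: algebra_simps)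
  hence "Ep m dvd (p - [:1,-1:] * q)" using ev_zero_iff by blast
  then obtain h where h: "p - [:1,-1:] * q = Ep m * h" by (elim dvdE)
  have "poly (p - [:1,-1:] * q) 1 = poly (Ep m * h) 1" using h by simp
  hence "poly p 1 = 2 * poly h 1" by (simp add: poly_Ep1)
  thus "even (poly p 1)" by simp
next
  assume "even (poly p 1)"
  then obtain c where c: "poly p 1 = 2 * c" by (elim evenE)
  have "poly (p - [:poly p 1:]) 1 = 0" by simp
  hence "[:-1, 1:] dvd (p - [:poly p 1:])" using poly_eq_0_iff_dvd by blast
  then obtain r where r: "p - [:poly p 1:] = [:-1, 1:] * r" by (elim dvdE)
  have "ev m p = 2 * of_int c + (zeta m - 1) * ev m r"
    using arg_cong[OF r, of "ev m"] by (simp add: c algebra_simps)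
  also have "... = (1 - zeta m) * ev m (smult c (\<Sum>i<2^m. monom 1 i) - r)"
    by (subst two_eq[of m]) (simp add: algebra_simps)
  finally show "\<exists>q. ev m p = (1 - zeta m) * ev m q" by blast
qed

lemma pi_pow_M: "\<exists>B. (1 - zeta m) ^ (2^m) = 2 * ev m B"
proof -
  obtain B where B: "[:1, -1::int:] ^ (2^m) = 1 + monom 1 (2^m) + smult 2 B"
    using frob[of "-1" m] by auto
  have "(1 - zeta m) ^ (2^m) = ev m ([:1, -1::int:] ^ (2^m))" by simp
  also have "... = 2 * ev m B" unfolding B by (simp add: zeta_M)
  finally show ?thesis by blast
qed

lemma pcompose_monom1: "pcompose (monom 1 n) q = q ^ n"
proof -
  have "pcompose [:0, 1:] q = q" by (simp add: pcompose_pCons)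
  thus ?thesis by (simp add: monom_altdef pcompose_smult pcompose_pow)
qed

lemma binom_ex: "\<exists>K. (a + b) ^ k = a ^ k + b * (K :: 'a :: comm_ring_1)"
proof (induct k)
  case 0 show ?case by (intro exI[of _ 0]) simp
next
  case (Suc k)
  then obtain K where K: "(a + b) ^ k = a ^ k + b * K" by blast
  have "(a + b) ^ Suc k = a ^ Suc k + b * (a ^ k + K * (a + b))"
    by (simp add: K algebra_simps)
  thus ?case by blast
qed

lemma aux_ring: "a ^ k * ((a * g) ^ k + e * K) * c + e * h = a ^ (2*k) * (g ^ k * c) + e * (a ^ k * K * c + h)"
  for a :: "'a::comm_ring_1"
proof -
  have "a ^ (2*k) = a ^ k * a ^ k" by (simp add: mult_2 power_add)
  thus ?thesis by (simp add: power_mult_distrib algebra_simps)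
qed

lemma two_pi_poly: "\<exists>C H. [:2:] = [:1,-1::int:] ^ (2^j) * C + Ep j * H"
proof (induct j)
  case 0
  have "[:2::int:] = [:1,-1:] ^ (2^0) * 1 + Ep 0 * 1"
    by (simp add: Ep_def monom_Suc monom_0 one_pCons)
  thus ?case by blast
next
  case (Suc j)
  then obtain C H where CH: "[:2:] = [:1,-1::int:] ^ (2^j) * C + Ep j * H" by blast
  define X2 where "X2 = (monom 1 2 :: int poly)"
  define x where "x = ([:0, 1:] :: int poly)"
  define N where "N = (2::nat) ^ Suc j"
  define G where "G = (\<Sum>i<N. x ^ i)"
  have m1: "[:1,-1::int:] = 1 - x" by (simp add: x_def one_pCons)
  have p11: "[:1,1::int:] = 1 + x" by (simp add: x_def one_pCons)
  have X2x: "X2 = x ^ 2" by (simp add: X2_def x_def monom_altdef)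
  have p1: "pcompose [:1,-1:] X2 = [:1,-1::int:] * [:1,1:]"
  proof -
    have "pcompose [:1,-1:] X2 = 1 - X2" by (simp add: pcompose_pCons one_pCons)
    also have "... = [:1,-1::int:] * [:1,1:]" unfolding m1 p11 X2x by (simp add: algebra_simps power2_eq_square)
    finally show ?thesis .
  qed
  have p2: "pcompose (Ep j) X2 = Ep (Suc j)"
    unfolding X2_def by (simp add: Ep_def pcompose_add pcompose_1 pcompose_monom1 monom_power mult.commute)
  have "pcompose [:2:] X2 = pcompose ([:1,-1::int:] ^ (2^j) * C + Ep j * H) X2"
    using CH by simp
  hence eq1: "[:2:] = ([:1,-1::int:] * [:1,1:]) ^ (2^j) * pcompose C X2 + Ep (Suc j) * pcompose H X2"
    by (simp add: pcompose_add pcompose_mult pcompose_pow p1 p2)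
  have gx: "1 - x ^ N = (1 - x) * G" unfolding G_def by (rule one_diff_power_eq)
  have EpS: "Ep (Suc j) = 1 + x ^ N" by (simp add: Ep_def x_def N_def monom_altdef)
  have idt: "[:1,1::int:] = [:1,-1:] * (G - 1) + Ep (Suc j)"
    unfolding m1 p11 EpS using gx by (simp add: algebra_simps)
  obtain K where K: "([:1,-1:] * (G - 1) + Ep (Suc j)) ^ (2^j) = ([:1,-1:] * (G - 1)) ^ (2^j) + Ep (Suc j) * K"
    using binom_ex by blast
  have "[:2:] = [:1,-1::int:] ^ (2^j) * [:1,1:] ^ (2^j) * pcompose C X2 + Ep (Suc j) * pcompose H X2"
    using eq1 by (simp only: power_mult_distrib)
  also have "... = [:1,-1::int:] ^ (2^j) * (([:1,-1:] * (G - 1)) ^ (2^j) + Ep (Suc j) * K) * pcompose C X2 + Ep (Suc j) * pcompose H X2"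
    by (subst idt, subst K) (rule refl)
  also have "... = [:1,-1::int:] ^ (2^Suc j) * ((G - 1) ^ (2^j) * pcompose C X2) + Ep (Suc j) * ([:1,-1::int:] ^ (2^j) * K * pcompose C X2 + pcompose H X2)"
    using aux_ring[of "[:1,-1::int:]" "2^j" "G - 1" "Ep (Suc j)" K "pcompose C X2" "pcompose H X2"]
    by simp
  finally show ?case by blast
qed

lemma two_pi: "\<exists>C. 2 = (1 - zeta m) ^ (2^m) * ev m C"
proof -
  obtain C H where CH: "[:2:] = [:1,-1::int:] ^ (2^m) * C + Ep m * H" using two_pi_poly by blast
  have "ev m [:2:] = ev m ([:1,-1::int:] ^ (2^m) * C + Ep m * H)" using CH by simp
  hence "2 = (1 - zeta m) ^ (2^m) * ev m C" by (simp add: ev_Ep)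
  thus ?thesis by blast
qed

lemma ev_two_even:
  assumes "ev m p = 2 * ev m q" "degree p < 2^m"
  shows "even (coeff p j)"
proof -
  obtain q1 r1 where qr: "pseudo_divmod q (Ep m) = (q1, r1)" by (cases "pseudo_divmod q (Ep m)") auto
  have eq: "smult (lead_coeff (Ep m) ^ (Suc (degree q) - degree (Ep m))) q = Ep m * q1 + r1"
    and rdeg: "r1 = 0 \<or> degree r1 < degree (Ep m)"
    using pseudo_divmod[OF Ep_ne0 qr] by simp_all
  have eq': "q = Ep m * q1 + r1" using eq by (simp add: lc_Ep)
  have "ev m (p - smult 2 r1) = 0" using assms(1) arg_cong[OF eq', of "ev m"] by (simp add: ev_Ep)
  moreover have "degree (p - smult 2 r1) < 2^m"
    using rdeg assms(2) by (auto simp: degree_Ep intro!: degree_diff_less)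
  ultimately have "p - smult 2 r1 = 0" using ev_zero_deg[of "p - smult 2 r1" m] by fastforce
  hence "p = smult 2 r1" by simp
  thus ?thesis by simp
qed


lemma zeta_ne_1: "zeta m \<noteq> 1"
proof
  assume "zeta m = 1"
  hence "zeta m ^ (2^m) = 1" by simp
  thus False by (simp add: zeta_M)
qed

lemma poly_pcompose_monom_1: "poly (pcompose q (monom 1 N)) 1 = poly q (1::int)"
  by (simp add: poly_pcompose poly_monom)

lemma K_even:
  assumes deg: "degree p < 2^m" and nrm: "ev m p * cnj (ev m p) = 2^n" and n2: "n \<ge> 2"
  shows "\<forall>j. even (coeff p j)"
proof (rule ccontr)
  assume nall: "\<not> (\<forall>j. even (coeff p j))"
  define pp where "pp = 1 - zeta m"
  define M where "M = (2::nat)^m"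
  have pp0: "pp \<noteq> 0" using zeta_ne_1 by (simp add: pp_def)
  have not2: "\<not> (\<exists>q. ev m p = 2 * ev m q)"
    using ev_two_even deg nall by blast
  obtain B where B: "pp ^ M = 2 * ev m B" using pi_pow_M unfolding pp_def M_def by blast
  have notM: "\<not> (\<exists>q. ev m p = pp ^ M * ev m q)"
  proof
    assume "\<exists>q. ev m p = pp ^ M * ev m q"
    then obtain q where "ev m p = pp ^ M * ev m q" by blast
    hence "ev m p = 2 * ev m (B * q)" by (simp add: B)
    thus False using not2 by blast
  qed
  define D where "D = {e. e \<le> M \<and> (\<exists>q. ev m p = pp ^ e * ev m q)}"
  have finD: "finite D" unfolding D_def by simp
  have D0: "0 \<in> D" unfolding D_def by auto
  define e0 where "e0 = Max D"
  have e0D: "e0 \<in> D" unfolding e0_def using finD D0 by (intro Max_in) auto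
  have e0max: "e \<in> D \<Longrightarrow> e \<le> e0" for e unfolding e0_def using finD by simp
  obtain q where q: "ev m p = pp ^ e0 * ev m q" and e0M: "e0 \<le> M" using e0D unfolding D_def by blast
  have e0lt: "e0 < M" using e0M notM q by (cases "e0 = M") auto
  have npi: "\<not> (\<exists>r. ev m q = pp * ev m r)"
  proof
    assume "\<exists>r. ev m q = pp * ev m r"
    then obtain r where "ev m q = pp * ev m r" by blast
    hence "ev m p = pp ^ Suc e0 * ev m r" using q by simp
    hence "Suc e0 \<in> D" using e0lt unfolding D_def by auto
    thus False using e0max by fastforce
  qed
  hence oq: "odd (poly q 1)" using pi_dvd_iff[of m q] unfolding pp_def by blast
  define W where "W = - (monom 1 (2 * 2^m - 1) :: int poly)"
  have cpp: "cnj pp = pp * ev m W"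
  proof -
    have s: "Suc (2 * 2^m - 1) = 2 * 2^m" by simp
    have "zeta m * zeta m ^ (2 * 2^m - 1) = zeta m ^ Suc (2 * 2^m - 1)" by (simp only: power_Suc)
    also have "... = 1" by (simp only: s zeta_2M)
    finally have z1: "zeta m * zeta m ^ (2 * 2^m - 1) = 1" .
    have "pp * ev m W = (- (zeta m ^ (2 * 2^m - 1))) + zeta m * zeta m ^ (2 * 2^m - 1)"
      by (simp add: pp_def W_def algebra_simps)
    also have "... = 1 - cnj (zeta m)" unfolding z1 cnj_zeta by simp
    finally show ?thesis by (simp add: pp_def)
  qed
  define q' where "q' = pcompose q (monom 1 (2 * 2^m - 1))"
  have cq: "cnj (ev m q) = ev m q'" unfolding q'_def by (rule ev_conj)
  have "(2::complex)^n = ev m p * cnj (ev m p)" using nrm by simp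
  also have "... = pp ^ (2 * e0) * ev m (W ^ e0 * q * q')"
    by (simp add: q cpp cq power_mult_distrib algebra_simps power_add[symmetric] mult_2 mult_2_right)
  finally have eqA: "(2::complex)^n = pp ^ (2 * e0) * ev m (W ^ e0 * q * q')" .
  obtain C where C: "2 = pp ^ M * ev m C" using two_pi unfolding pp_def M_def by blast
  have "(2::complex)^n = 2^2 * 2^(n-2)" using n2 by (metis le_add_diff_inverse power_add)
  also have "... = (pp ^ M * ev m C)^2 * 2^(n-2)" by (subst (1) C) simp
  also have "... = pp ^ (2 * e0) * (pp * (pp ^ (2 * M - 2 * e0 - 1) * ev m (C ^ 2 * [:2:]^(n-2))))"
  proof -
    have "2 * M = 2 * e0 + Suc (2 * M - 2 * e0 - 1)" using e0lt by simp
    hence "pp ^ (2 * M) = pp ^ (2 * e0) * (pp * pp ^ (2 * M - 2 * e0 - 1))"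
      by (metis power_Suc power_add)
    thus ?thesis by (simp add: power_mult_distrib power_mult[symmetric] mult.commute mult.left_commute)
  qed
  finally have "pp ^ (2 * e0) * ev m (W ^ e0 * q * q') = pp ^ (2 * e0) * (pp * (pp ^ (2 * M - 2 * e0 - 1) * ev m (C ^ 2 * [:2:]^(n-2))))"
    using eqA by simp
  hence "ev m (W ^ e0 * q * q') = pp * (pp ^ (2 * M - 2 * e0 - 1) * ev m (C ^ 2 * [:2:]^(n-2)))"
    using pp0 by simp
  also have "pp ^ (2 * M - 2 * e0 - 1) * ev m (C ^ 2 * [:2:]^(n-2)) = ev m ([:1,-1:] ^ (2 * M - 2 * e0 - 1) * (C ^ 2 * [:2:]^(n-2)))"
    by (simp add: pp_def)
  finally have "even (poly (W ^ e0 * q * q') 1)" using pi_dvd_iff[of m "W ^ e0 * q * q'"] unfolding pp_def by blast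
  moreover have "poly W 1 = -1" by (simp add: W_def poly_monom)
  moreover have "poly q' 1 = poly q 1" unfolding q'_def by (rule poly_pcompose_monom_1)
  ultimately show False using oq by simp
qed

lemma cis_eq_1_int: assumes "cis x = 1" shows "\<exists>k::int. x = of_int k * 2 * pi"
proof -
  have "cos x = 1" using arg_cong[OF assms, of Re] by simp
  thus ?thesis using cos_one_2pi_int by blast
qed

lemma zeta_2d_ne1:
  assumes "0 < d" "d < 2^m"
  shows "zeta m ^ (2 * d) \<noteq> 1"
proof
  assume "zeta m ^ (2 * d) = 1"
  hence "cis (real (2 * d) * pi / 2^m) = 1" by (simp add: zeta_pow)
  then obtain k :: int where k: "real (2 * d) * pi / 2^m = of_int k * 2 * pi" using cis_eq_1_int by blast
  hence "real d = of_int k * 2^m" by (simp add: field_simps)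
  hence "int d = k * 2^m" by (metis of_int_eq_iff of_int_mult of_int_of_nat_eq of_int_numeral of_int_power)
  moreover have "int d > 0" "int d < 2^m" using assms by auto
  ultimately show False
    by (metis mult_pos_pos mult_strict_right_mono not_less zero_less_power zero_less_numeral
              mult_1 zero_less_mult_iff linorder_neqE_linordered_idom int_one_le_iff_zero_less
              mult_le_cancel_right1 less_le_trans)
qed

lemma orth_d: assumes "d < 2^m"
  shows "(\<Sum>s<2^m. (zeta m ^ (2*s+1)) ^ d) = (if d = 0 then 2^m else 0)"
proof (cases "d = 0")
  case True then show ?thesis by simp
next
  case False
  define w where "w = zeta m ^ (2 * d)"
  have w1: "w \<noteq> 1" unfolding w_def using zeta_2d_ne1 False assms by auto
  have wM: "w ^ (2^m) = 1" unfolding w_def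
    by (metis power_mult mult.commute mult.left_commute zeta_2M power_one)
  have "(\<Sum>s<2^m. (zeta m ^ (2*s+1)) ^ d) = (\<Sum>s<2^m. zeta m ^ d * w ^ s)"
    by (intro sum.cong refl) (simp add: w_def power_mult[symmetric] power_add algebra_simps)
  also have "... = zeta m ^ d * (\<Sum>s<2^m. w ^ s)" by (simp add: sum_distrib_left)
  also have "(\<Sum>s<(2::nat)^m. w ^ s) = 0" using w1 wM by (simp add: geometric_sum)
  finally show ?thesis using False by simp
qed

lemma unit_zeta_pow: "(zeta m ^ t) * cnj (zeta m ^ t) = 1"
  by (metis complex_cnj_power power_mult_distrib zeta_cnj_mult mult.commute power_one)

lemma unit_pow_ge: "z * cnj z = 1 \<Longrightarrow> j \<le> i \<Longrightarrow> z ^ i * cnj (z ^ j) = z ^ (i - j)"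
proof -
  assume u: "z * cnj z = 1" and ji: "j \<le> i"
  have "z ^ i * cnj (z ^ j) = z ^ (i - j) * (z * cnj z) ^ j"
    using ji by (simp add: power_mult_distrib power_add[symmetric])
  thus ?thesis using u by simp
qed

lemma unit_pow_lt: "z * cnj z = 1 \<Longrightarrow> i \<le> j \<Longrightarrow> z ^ i * cnj (z ^ j) = cnj (z ^ (j - i))"
proof -
  assume u: "z * cnj z = 1" and ji: "i \<le> j"
  have "z ^ i * cnj (z ^ j) = cnj (z ^ (j - i)) * (z * cnj z) ^ i"
    using ji by (simp add: power_mult_distrib power_add[symmetric])
  thus ?thesis using u by simp
qed

lemma orth:
  assumes "i < 2^m" "j < 2^m"
  shows "(\<Sum>s<2^m. (zeta m ^ (2*s+1)) ^ i * cnj ((zeta m ^ (2*s+1)) ^ j)) = (if i = j then 2^m else 0)"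
proof (cases "j \<le> i")
  case True
  have "(\<Sum>s<2^m. (zeta m ^ (2*s+1)) ^ i * cnj ((zeta m ^ (2*s+1)) ^ j)) = (\<Sum>s<2^m. (zeta m ^ (2*s+1)) ^ (i - j))"
    by (intro sum.cong refl unit_pow_ge[OF unit_zeta_pow True])
  also have "... = (if i = j then 2^m else 0)" using orth_d[of "i - j" m] assms True by auto
  finally show ?thesis .
next
  case False
  have "(\<Sum>s<2^m. (zeta m ^ (2*s+1)) ^ i * cnj ((zeta m ^ (2*s+1)) ^ j)) = (\<Sum>s<2^m. cnj ((zeta m ^ (2*s+1)) ^ (j - i)))"
    using False by (intro sum.cong refl unit_pow_lt[OF unit_zeta_pow]) auto
  also have "... = cnj (\<Sum>s<2^m. (zeta m ^ (2*s+1)) ^ (j - i))" by (simp add: cnj_sum)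
  also have "... = 0" using orth_d[of "j - i" m] assms False by auto
  finally show ?thesis using False by simp
qed

lemma evz_coeffs: "degree p < N \<Longrightarrow> evz z p = (\<Sum>j<N. of_int (coeff p j) * z ^ j)"
proof -
  assume "degree p < N"
  hence "p = (\<Sum>j\<le>N - 1. monom (coeff p j) j)" by (intro poly_as_sum_of_monoms'[symmetric]) auto
  also have "{..N - 1} = {..<N}" using \<open>degree p < N\<close> by auto
  finally have "evz z p = evz z (\<Sum>j<N. monom (coeff p j) j)" by simp
  thus ?thesis by (simp add: evz_sum)
qed


lemma conj_all:
  assumes nrm: "ev m p * cnj (ev m p) = 2^n"
  shows "evz (zeta m ^ (2*s+1)) p * cnj (evz (zeta m ^ (2*s+1)) p) = 2^n"
proof -
  define p' where "p' = pcompose p (monom 1 (2 * 2^m - 1))"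
  define T where "T = p * p' - [:2^n:]"
  have pc: "ev m p' = cnj (ev m p)" unfolding p'_def by (rule ev_conj[symmetric])
  have "ev m T = 0" using nrm by (simp add: T_def pc)
  then obtain h where h: "T = Ep m * h" using ev_zero_iff by (metis dvdE)
  define z where "z = zeta m ^ (2*s+1)"
  have "z ^ (2^m) = (zeta m ^ (2^m)) ^ (2*s+1)" unfolding z_def by (metis power_mult mult.commute)
  hence zM: "z ^ (2^m) = -1" by (simp add: zeta_M)
  have "evz z T = 0" by (simp add: h evz_Ep zM)
  moreover have "evz z p' = cnj (evz z p)"
  proof -
    have "evz z (monom 1 (2*2^m - 1)) = cnj z" by (simp only: evz_monom of_int_1 mult_1 z_def cnj_zeta_pow)
    thus ?thesis by (simp only: p'_def evz_pcompose evz_cnj)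
  qed
  ultimately show ?thesis by (simp add: T_def z_def)
qed

lemma swap3: "(\<Sum>s\<in>S. \<Sum>i\<in>I. \<Sum>j\<in>J. g i j * f s i j) = (\<Sum>i\<in>I. \<Sum>j\<in>J. g i j * (\<Sum>s\<in>S. f s i j))"
  for g :: "_ \<Rightarrow> _ \<Rightarrow> 'a::comm_semiring_0"
proof -
  have "(\<Sum>s\<in>S. \<Sum>i\<in>I. \<Sum>j\<in>J. g i j * f s i j) = (\<Sum>i\<in>I. \<Sum>s\<in>S. \<Sum>j\<in>J. g i j * f s i j)"
    by (rule sum.swap)
  also have "... = (\<Sum>i\<in>I. \<Sum>j\<in>J. \<Sum>s\<in>S. g i j * f s i j)"
    by (rule sum.cong[OF refl], rule sum.swap)
  also have "... = (\<Sum>i\<in>I. \<Sum>j\<in>J. g i j * (\<Sum>s\<in>S. f s i j))"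
    by (simp add: sum_distrib_left)
  finally show ?thesis .
qed

lemma K_sumsq:
  assumes deg: "degree p < 2^m" and nrm: "ev m p * cnj (ev m p) = 2^n"
  shows "(\<Sum>j<2^m. (coeff p j)^2) = 2^n"
proof -
  define c where "c = (\<lambda>j. complex_of_int (coeff p j))"
  define zz where "zz = (\<lambda>s. zeta m ^ (2*s+1))"
  have ev_s: "evz (zz s) p = (\<Sum>j<2^m. c j * zz s ^ j)" for s
    unfolding c_def by (rule evz_coeffs[OF deg])
  have "(\<Sum>s<2^m. evz (zz s) p * cnj (evz (zz s) p)) = (\<Sum>s<(2::nat)^m. (2::complex)^n)"
    by (intro sum.cong refl) (unfold zz_def, rule conj_all[OF nrm])
  also have "... = 2^m * 2^n" by simp
  finally have A: "(\<Sum>s<2^m. evz (zz s) p * cnj (evz (zz s) p)) = 2^m * 2^n" .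
  have ex: "evz (zz s) p * cnj (evz (zz s) p) = (\<Sum>i<2^m. \<Sum>j<2^m. c i * c j * (zz s ^ i * cnj (zz s ^ j)))" for s
    unfolding ev_s cnj_sum sum_product by (intro sum.cong refl) (simp add: c_def)
  have "(\<Sum>s<2^m. evz (zz s) p * cnj (evz (zz s) p))
      = (\<Sum>s<2^m. \<Sum>i<2^m. \<Sum>j<2^m. c i * c j * (zz s ^ i * cnj (zz s ^ j)))"
    by (simp only: ex)
  also have "... = (\<Sum>i<2^m. \<Sum>j<2^m. c i * c j * (\<Sum>s<2^m. zz s ^ i * cnj (zz s ^ j)))"
    by (rule swap3)
  also have "... = (\<Sum>i<2^m. \<Sum>j<2^m. c i * c j * (if i = j then 2^m else 0))"
    by (intro sum.cong refl, unfold zz_def, subst orth) auto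
  also have "... = (\<Sum>i<2^m. c i * c i * 2^m)"
    by (simp add: if_distrib sum.delta cong: if_cong)
  finally have "(\<Sum>i<2^m. c i * c i * 2^m) = 2^m * 2^n" using A by simp
  moreover have "(\<Sum>i<2^m. c i * c i) * 2^m = (\<Sum>i<2^m. c i * c i * 2^m)" by (simp add: sum_distrib_right)
  ultimately have "(\<Sum>i<2^m. c i * c i) * 2^m = 2^n * 2^m" by (simp add: mult.commute)
  hence "(\<Sum>i<2^m. c i * c i) = 2^n" by (subst (asm) mult_cancel_right) simp
  hence "complex_of_int (\<Sum>i<2^m. (coeff p i)^2) = complex_of_int (2^n)"
    by (simp add: c_def power2_eq_square)
  thus ?thesis by (simp only: of_int_eq_iff)
qed


lemma sumsq_one:
  fixes c :: "nat \<Rightarrow> int"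
  assumes "(\<Sum>j<N. (c j)^2) = 1"
  shows "\<exists>j0<N. (c j0)^2 = 1 \<and> (\<forall>j<N. j \<noteq> j0 \<longrightarrow> c j = 0)"
proof -
  have "\<exists>j0<N. c j0 \<noteq> 0"
  proof (rule ccontr)
    assume "\<not> (\<exists>j0<N. c j0 \<noteq> 0)"
    hence "(\<Sum>j<N. (c j)^2) = 0" by simp
    thus False using assms by simp
  qed
  then obtain j0 where j0: "j0 < N" "c j0 \<noteq> 0" by blast
  have ge: "(c j0)^2 \<ge> 1" using j0(2) by (metis int_one_le_iff_zero_less zero_less_power2)
  have split: "(\<Sum>j<N. (c j)^2) = (c j0)^2 + (\<Sum>j\<in>{..<N} - {j0}. (c j)^2)"
    using j0(1) by (subst sum.remove[of _ j0]) auto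
  have nn: "(\<Sum>j\<in>{..<N} - {j0}. (c j)^2) \<ge> 0" by (intro sum_nonneg) simp
  have "(\<Sum>j\<in>{..<N} - {j0}. (c j)^2) = 0" and c1: "(c j0)^2 = 1" using split assms ge nn by linarith+
  hence "\<forall>j\<in>{..<N} - {j0}. (c j)^2 = 0" by (subst (asm) sum_nonneg_eq_0_iff) auto
  thus ?thesis using j0 c1 by auto
qed

lemma K:
  assumes "degree p < 2^m" "ev m p * cnj (ev m p) = 2^(2*h)"
  shows "\<exists>j0<2^m. \<exists>e. e^2 = 2^(2*h) \<and> (\<forall>j. coeff p j = (if j = j0 then e else 0))"
  using assms
proof (induct h arbitrary: p)
  case 0
  have "(\<Sum>j<2^m. (coeff p j)^2) = 1" using K_sumsq[OF 0(1), of 0] 0(2) by simp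
  then obtain j0 where j0: "j0 < 2^m" "(coeff p j0)^2 = 1" "\<forall>j<2^m. j \<noteq> j0 \<longrightarrow> coeff p j = 0"
    using sumsq_one by blast
  have "\<forall>j. coeff p j = (if j = j0 then coeff p j0 else 0)"
  proof
    fix j show "coeff p j = (if j = j0 then coeff p j0 else 0)"
    proof (cases "j < 2^m")
      case True then show ?thesis using j0 by auto
    next
      case False
      hence "j > degree p" using 0(1) by simp
      hence "coeff p j = 0" by (rule coeff_eq_0)
      thus ?thesis using False j0 by auto
    qed
  qed
  moreover have "(coeff p j0)^2 = 2^(2*0)" using j0(2) by simp
  ultimately show ?case using j0(1) by blast
next
  case (Suc h)
  have ev: "\<forall>j. even (coeff p j)" using K_even[OF Suc(2) Suc(3)] by simp
  define q where "q = map_poly (\<lambda>x. x div 2) p"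
  have pq: "p = smult 2 q"
    by (rule poly_eqI) (simp add: q_def coeff_map_poly ev)
  have dq: "degree q < 2^m" using Suc(2) pq by (cases "q = 0") auto
  have e2: "2 * Suc h = 2 + 2 * h" by simp
  have "ev m p = 2 * ev m q" by (simp add: pq)
  hence "ev m p * cnj (ev m p) = 4 * (ev m q * cnj (ev m q))" by simp
  moreover have "(2::complex)^(2*Suc h) = 4 * 2^(2*h)" unfolding e2 power_add by simp
  ultimately have "4 * (ev m q * cnj (ev m q)) = 4 * 2^(2*h)" using Suc(3) by simp
  hence nq: "ev m q * cnj (ev m q) = 2^(2*h)" by simp
  obtain j0 e where j0: "j0 < 2^m" "e^2 = 2^(2*h)" "\<forall>j. coeff q j = (if j = j0 then e else 0)"
    using Suc(1)[OF dq nq] by blast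
  have "(2*e)^2 = 2^(2 * Suc h)" using j0(2) unfolding e2 power_add by (simp add: power_mult_distrib)
  moreover have "\<forall>j. coeff p j = (if j = j0 then 2*e else 0)" using j0(3) by (simp add: pq)
  ultimately show ?case using j0(1) by blast
qed

lemma onlyif_core:
  fixes N :: "nat set \<Rightarrow> int"
  assumes nrm: "cmod (\<Sum>Y\<in>Pow {..<m}. zeta m ^ sY Y * of_int (N Y)) = 2^h"
  shows "\<exists>Y0\<subseteq>{..<m}. \<exists>e. e^2 = 2^(2*h) \<and> (\<forall>Y\<subseteq>{..<m}. N Y = (if Y = Y0 then e else 0))"
proof -
  define p where "p = (\<Sum>Y\<in>Pow {..<m}. monom (N Y) (sY Y))"
  have cp: "coeff p j = (\<Sum>Y\<in>Pow {..<m}. if sY Y = j then N Y else 0)" for j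
    unfolding p_def by (simp add: coeff_sum coeff_monom)
  have cY: "coeff p (sY Y) = N Y" if Y: "Y \<subseteq> {..<m}" for Y
  proof -
    have "coeff p (sY Y) = (\<Sum>Y'\<in>Pow {..<m}. if Y' = Y then N Y' else 0)"
      unfolding cp using Y by (intro sum.cong refl) (auto dest: sY_inj)
    also have "... = N Y" using Y by simp
    finally show ?thesis .
  qed
  have cout: "coeff p j = 0" if "\<forall>Y\<in>Pow {..<m}. sY Y \<noteq> j" for j
    unfolding cp using that by (intro sum.neutral) auto
  have "degree p \<le> 2^m - 1"
  proof (rule degree_le, intro allI impI)
    fix i :: nat assume "2^m - 1 < i"
    have "\<forall>Y\<in>Pow {..<m}. sY Y \<noteq> i"
    proof
      fix Y assume "Y \<in> Pow {..<m}"
      hence "sY Y < 2^m" by (intro sY_less) auto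
      thus "sY Y \<noteq> i" using \<open>2^m - 1 < i\<close> by linarith
    qed
    thus "coeff p i = 0" by (rule cout)
  qed
  moreover have "(0::nat) < 2^m" by simp
  ultimately have deg: "degree p < 2^m" by linarith
  have evp: "ev m p = (\<Sum>Y\<in>Pow {..<m}. zeta m ^ sY Y * of_int (N Y))"
    unfolding p_def by (simp add: evz_sum mult.commute)
  have "ev m p * cnj (ev m p) = complex_of_real ((cmod (ev m p))^2)" by (rule complex_norm_square[symmetric])
  also have "... = 2^(2*h)" unfolding evp nrm by (simp add: power_mult[symmetric] mult.commute)
  finally obtain j0 e where j0: "j0 < 2^m" "e^2 = 2^(2*h)" "\<forall>j. coeff p j = (if j = j0 then e else 0)"
    using K[OF deg] by blast
  have "e \<noteq> 0" using j0(2) by auto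
  hence "coeff p j0 \<noteq> 0" using j0(3) by simp
  then obtain Y0 where Y0: "Y0 \<in> Pow {..<m}" "sY Y0 = j0" using cout by blast
  have "\<forall>Y\<subseteq>{..<m}. N Y = (if Y = Y0 then e else 0)"
  proof (intro allI impI)
    fix Y assume Y: "Y \<subseteq> {..<m}"
    have "N Y = (if sY Y = j0 then e else 0)" using cY[OF Y] j0(3) by simp
    also have "sY Y = j0 \<longleftrightarrow> Y = Y0" using Y0 Y sY_inj[of Y m Y0] by auto
    finally show "N Y = (if Y = Y0 then e else 0)" .
  qed
  thus ?thesis using Y0 j0(2) by blast
qed

lemma pm1_triple:
  fixes a b c d :: int
  assumes "a = 1 \<or> a = -1" "b = 1 \<or> b = -1" "c = 1 \<or> c = -1" "d = 1 \<or> d = -1"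
  shows "\<bar>a + b + c - d\<bar> = 2 \<longleftrightarrow> d = a * b * c"
  using assms by (elim disjE) simp_all

lemma cmod_zeta_pow: "cmod (zeta m ^ t) = 1"
  by (simp add: zeta_def norm_power)

lemma if_core:
  fixes N :: "nat set \<Rightarrow> int" and v :: "nat set \<Rightarrow> int"
  assumes vdef: "\<And>S. S \<subseteq> {..<m} \<Longrightarrow> v S = (\<Sum>Y\<in>Pow {..<m}. chi S Y * N Y)"
    and absv: "\<And>S. S \<subseteq> {..<m} \<Longrightarrow> \<bar>v S\<bar> = 2^h"
    and trip: "\<And>S1 S2 S3. S1 \<subseteq> {..<m} \<Longrightarrow> S2 \<subseteq> {..<m} \<Longrightarrow> S3 \<subseteq> {..<m} \<Longrightarrow>
                  \<bar>v S1 + v S2 + v S3 - v (sd (sd S1 S2) S3)\<bar> = 2 * 2^h"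
  shows "cmod (\<Sum>Y\<in>Pow {..<m}. zeta m ^ sY Y * of_int (N Y)) = 2^h"
proof -
  define H :: int where "H = 2^h"
  have Hpos: "H > 0" by (simp add: H_def)
  define eps where "eps = (\<lambda>S. sgn (v S))"
  have vH: "v S = H * eps S" if "S \<subseteq> {..<m}" for S
    using absv[OF that] by (simp add: eps_def H_def) (metis abs_mult_sgn mult.commute)
  have epm: "eps S = 1 \<or> eps S = -1" if "S \<subseteq> {..<m}" for S
    using absv[OF that] by (auto simp: eps_def sgn_if)
  have sdsub: "sd A B \<subseteq> {..<m}" if "A \<subseteq> {..<m}" "B \<subseteq> {..<m}" for A B
    using that by (auto simp: sd_def)
  have etrip: "eps (sd (sd S1 S2) S3) = eps S1 * eps S2 * eps S3"
    if "S1 \<subseteq> {..<m}" "S2 \<subseteq> {..<m}" "S3 \<subseteq> {..<m}" for S1 S2 S3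
  proof -
    have s4: "sd (sd S1 S2) S3 \<subseteq> {..<m}" using that by (auto simp: sd_def)
    have "v S1 + v S2 + v S3 - v (sd (sd S1 S2) S3) = H * (eps S1 + eps S2 + eps S3 - eps (sd (sd S1 S2) S3))"
      unfolding vH[OF that(1)] vH[OF that(2)] vH[OF that(3)] vH[OF s4] by (simp add: algebra_simps)
    hence "\<bar>H * (eps S1 + eps S2 + eps S3 - eps (sd (sd S1 S2) S3))\<bar> = H * 2"
      using trip[OF that] by (simp add: H_def)
    hence "\<bar>eps S1 + eps S2 + eps S3 - eps (sd (sd S1 S2) S3)\<bar> = 2"
      using Hpos by (simp add: abs_mult)
    thus ?thesis using pm1_triple[OF epm[OF that(1)] epm[OF that(2)] epm[OF that(3)] epm[OF s4]] by simp
  qed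
  define psi where "psi = (\<lambda>S. eps S * eps {})"
  have e0: "eps {} * eps {} = 1" using epm[of "{}"] by auto
  have psi_sd: "psi (sd S T) = psi S * psi T" if "S \<subseteq> {..<m}" "T \<subseteq> {..<m}" for S T
  proof -
    have "sd (sd S T) {} = sd S T" by (simp add: sd_def)
    hence "eps (sd S T) = eps S * eps T * eps {}" using etrip[OF that, of "{}"] by simp
    thus ?thesis unfolding psi_def using e0 by (simp add: algebra_simps)
  qed
  define Y0 where "Y0 = {i \<in> {..<m}. psi {i} = -1}"
  have Y0m: "Y0 \<subseteq> {..<m}" by (auto simp: Y0_def)
  have psi_chi: "psi S = chi S Y0" if "S \<subseteq> {..<m}" for S
  proof -
    have "finite S" using that finite_subset by blast
    thus ?thesis using that
    proof (induct S rule: finite_induct)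
      case empty then show ?case using e0 by (simp add: psi_def chi_def)
    next
      case (insert i S)
      have im: "i < m" and Sm: "S \<subseteq> {..<m}" using insert(4) by auto
      have ins: "insert i S = sd {i} S" using insert(2) by (auto simp: sd_def)
      have "psi (insert i S) = psi {i} * psi S" unfolding ins using im Sm by (intro psi_sd) auto
      also have "psi S = chi S Y0" using insert(3) Sm by simp
      also have "psi {i} = chi {i} Y0"
      proof -
        have "psi {i} = 1 \<or> psi {i} = -1" using epm[of "{i}"] epm[of "{}"] im by (auto simp: psi_def)
        thus ?thesis using im by (auto simp: chi_def Y0_def)
      qed
      also have "chi {i} Y0 * chi S Y0 = chi (insert i S) Y0" unfolding ins by (rule chi_sd_left[symmetric]) (use insert(1) in auto)
      finally show ?case .
    qed
  qed
  have vchi: "v S = H * eps {} * chi S Y0" if "S \<subseteq> {..<m}" for S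
  proof -
    have "eps S = psi S * eps {}" unfolding psi_def using e0 by (simp add: mult.assoc)
    thus ?thesis using vH[OF that] psi_chi[OF that] by simp
  qed
  have inv: "(\<Sum>S\<in>Pow {..<m}. chi S Y * v S) = 2^m * N Y" if Y: "Y \<subseteq> {..<m}" for Y
  proof -
    have "(\<Sum>S\<in>Pow {..<m}. chi S Y * v S) = (\<Sum>S\<in>Pow {..<m}. \<Sum>Y'\<in>Pow {..<m}. chi S Y * chi S Y' * N Y')"
      by (intro sum.cong refl) (simp add: vdef sum_distrib_left mult.assoc)
    also have "... = (\<Sum>Y'\<in>Pow {..<m}. N Y' * (\<Sum>S\<in>Pow {..<m}. chi S Y * chi S Y'))"
      by (subst sum.swap) (simp add: sum_distrib_left algebra_simps)
    also have "... = (\<Sum>Y'\<in>Pow {..<m}. N Y' * (if Y = Y' then 2^m else 0))"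
      using Y by (intro sum.cong refl) (simp add: chi_orth)
    also have "... = 2^m * N Y" using Y by (simp add: if_distrib cong: if_cong)
    finally show ?thesis .
  qed
  have NY: "N Y = (if Y = Y0 then H * eps {} else 0)" if Y: "Y \<subseteq> {..<m}" for Y
  proof -
    have "2^m * N Y = (\<Sum>S\<in>Pow {..<m}. chi S Y * (H * eps {} * chi S Y0))"
      using inv[OF Y] vchi by (metis (no_types, lifting) PowD sum.cong)
    also have "... = H * eps {} * (\<Sum>S\<in>Pow {..<m}. chi S Y * chi S Y0)"
      by (simp add: sum_distrib_left algebra_simps)
    also have "... = 2^m * (if Y = Y0 then H * eps {} else 0)" using Y Y0m by (simp add: chi_orth)
    finally show ?thesis by simp
  qed
  have "(\<Sum>Y\<in>Pow {..<m}. zeta m ^ sY Y * of_int (N Y)) = (\<Sum>Y\<in>Pow {..<m}. if Y = Y0 then zeta m ^ sY Y0 * of_int (H * eps {}) else 0)"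
    by (intro sum.cong refl) (simp add: NY)
  also have "... = zeta m ^ sY Y0 * of_int (H * eps {})" using Y0m by simp
  finally have "cmod (\<Sum>Y\<in>Pow {..<m}. zeta m ^ sY Y * of_int (N Y)) = cmod (of_int (H * eps {}) :: complex)"
    by (simp add: norm_mult cmod_zeta_pow)
  also have "... = H" using epm[of "{}"] Hpos by auto
  finally show ?thesis by (simp add: H_def)
qed

definition Yx :: "(nat \<Rightarrow> (nat \<Rightarrow> bool) \<Rightarrow> bool) \<Rightarrow> nat \<Rightarrow> (nat \<Rightarrow> bool) \<Rightarrow> nat set" where
  "Yx a m x = {j \<in> {..<m}. a j x}"
definition sig :: "(nat \<Rightarrow> (nat \<Rightarrow> bool) \<Rightarrow> bool) \<Rightarrow> nat \<Rightarrow> ((nat \<Rightarrow> bool) \<Rightarrow> bool) \<Rightarrow> (nat \<Rightarrow> bool) \<Rightarrow> int" where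
  "sig a m L x = (if a m x \<noteq> L x then -1 else 1)"
definition NY :: "(nat \<Rightarrow> (nat \<Rightarrow> bool) \<Rightarrow> bool) \<Rightarrow> nat \<Rightarrow> nat \<Rightarrow> ((nat \<Rightarrow> bool) \<Rightarrow> bool) \<Rightarrow> nat set \<Rightarrow> int" where
  "NY a m n L Y = (\<Sum>x\<in>{x \<in> Vn n. Yx a m x = Y}. sig a m L x)"
definition gS :: "(nat \<Rightarrow> (nat \<Rightarrow> bool) \<Rightarrow> bool) \<Rightarrow> nat \<Rightarrow> nat set \<Rightarrow> (nat \<Rightarrow> bool) \<Rightarrow> bool" where
  "gS a m S x = (a m x \<noteq> odd (card {j \<in> S. a j x}))"
definition Wal :: "nat \<Rightarrow> ((nat \<Rightarrow> bool) \<Rightarrow> bool) \<Rightarrow> ((nat \<Rightarrow> bool) \<Rightarrow> bool) \<Rightarrow> int" where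
  "Wal n g L = (\<Sum>x\<in>Vn n. (-1::int) ^ of_bool (g x \<noteq> L x))"

lemma Yx_sub: "Yx a m x \<in> Pow {..<m}" by (auto simp: Yx_def)

lemma fx_split: "(\<Sum>j<Suc m. 2^j * of_bool (a j x)) = sY (Yx a m x) + 2^m * of_bool (a m x)"
proof -
  have "sY (Yx a m x) = (\<Sum>j<m. if a j x then 2^j else 0)"
    unfolding sY_def Yx_def by (rule sum.inter_filter) simp
  also have "... = (\<Sum>j<m. 2^j * of_bool (a j x))" by (intro sum.cong refl) auto
  finally show ?thesis by simp
qed

lemma cis_zeta: "cis (2 * pi * real N / 2 ^ Suc m) = zeta m ^ N"
proof -
  have "2 * pi * real N / 2 ^ Suc m = real N * pi / 2^m" by (simp add: field_simps)
  thus ?thesis by (simp only: zeta_pow)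
qed

lemma G1:
  "(\<Sum>x\<in>Vn n. cis (2 * pi * real (\<Sum>j<Suc m. 2^j * of_bool (a j x)) / 2 ^ Suc m) * (-1) ^ of_bool (L x))
   = (\<Sum>Y\<in>Pow {..<m}. zeta m ^ sY Y * of_int (NY a m n L Y))"
proof -
  have t: "cis (2 * pi * real (\<Sum>j<Suc m. 2^j * of_bool (a j x)) / 2 ^ Suc m) * (-1) ^ of_bool (L x)
         = zeta m ^ sY (Yx a m x) * of_int (sig a m L x)" for x
  proof -
    have "zeta m ^ (sY (Yx a m x) + 2^m * of_bool (a m x)) = zeta m ^ sY (Yx a m x) * (zeta m ^ 2^m) ^ of_bool (a m x)"
      by (simp add: power_add power_mult)
    thus ?thesis unfolding cis_zeta fx_split by (simp add: zeta_M sig_def)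
  qed
  have "(\<Sum>x\<in>Vn n. cis (2 * pi * real (\<Sum>j<Suc m. 2^j * of_bool (a j x)) / 2 ^ Suc m) * (-1) ^ of_bool (L x))
      = (\<Sum>x\<in>Vn n. zeta m ^ sY (Yx a m x) * of_int (sig a m L x))"
    by (simp only: t)
  also have "... = (\<Sum>Y\<in>Pow {..<m}. \<Sum>x\<in>{x. x \<in> Vn n \<and> Yx a m x = Y}. zeta m ^ sY (Yx a m x) * of_int (sig a m L x))"
    by (rule sum.group[symmetric]) (auto simp: finite_Vn Yx_def)
  also have "... = (\<Sum>Y\<in>Pow {..<m}. zeta m ^ sY Y * of_int (NY a m n L Y))"
  proof (intro sum.cong refl)
    fix Y
    have "(\<Sum>x\<in>{x. x \<in> Vn n \<and> Yx a m x = Y}. zeta m ^ sY (Yx a m x) * of_int (sig a m L x))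
        = (\<Sum>x\<in>{x. x \<in> Vn n \<and> Yx a m x = Y}. zeta m ^ sY Y * of_int (sig a m L x))"
      by (intro sum.cong refl) auto
    also have "... = zeta m ^ sY Y * of_int (NY a m n L Y)"
      by (simp add: NY_def sum_distrib_left)
    finally show "(\<Sum>x\<in>{x. x \<in> Vn n \<and> Yx a m x = Y}. zeta m ^ sY (Yx a m x) * of_int (sig a m L x))
        = zeta m ^ sY Y * of_int (NY a m n L Y)" .
  qed
  finally show ?thesis .
qed

lemma G2:
  assumes S: "S \<subseteq> {..<m}"
  shows "Wal n (gS a m S) L = (\<Sum>Y\<in>Pow {..<m}. chi S Y * NY a m n L Y)"
proof -
  have t: "(-1::int) ^ of_bool (gS a m S x \<noteq> L x) = chi S (Yx a m x) * sig a m L x" for x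
  proof -
    have "{j \<in> S. a j x} = S \<inter> Yx a m x" using S by (auto simp: Yx_def)
    thus ?thesis by (auto simp: gS_def chi_def sig_def minus_one_power_iff)
  qed
  have "Wal n (gS a m S) L = (\<Sum>x\<in>Vn n. chi S (Yx a m x) * sig a m L x)"
    unfolding Wal_def by (simp only: t)
  also have "... = (\<Sum>Y\<in>Pow {..<m}. \<Sum>x\<in>{x. x \<in> Vn n \<and> Yx a m x = Y}. chi S (Yx a m x) * sig a m L x)"
    by (rule sum.group[symmetric]) (auto simp: finite_Vn Yx_def)
  also have "... = (\<Sum>Y\<in>Pow {..<m}. chi S Y * NY a m n L Y)"
  proof (intro sum.cong refl)
    fix Y
    have "(\<Sum>x\<in>{x. x \<in> Vn n \<and> Yx a m x = Y}. chi S (Yx a m x) * sig a m L x)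
        = (\<Sum>x\<in>{x. x \<in> Vn n \<and> Yx a m x = Y}. chi S Y * sig a m L x)"
      by (intro sum.cong refl) auto
    also have "... = chi S Y * NY a m n L Y" by (simp add: NY_def sum_distrib_left)
    finally show "(\<Sum>x\<in>{x. x \<in> Vn n \<and> Yx a m x = Y}. chi S (Yx a m x) * sig a m L x) = chi S Y * NY a m n L Y" .
  qed
  finally show ?thesis .
qed

lemma Wal_cong: "(\<And>x. x \<in> Vn n \<Longrightarrow> g x = g' x) \<Longrightarrow> Wal n g L = Wal n g' L"
  unfolding Wal_def by (intro sum.cong refl) auto

lemma restrV_eqD: "restrV n g = restrV n g' \<Longrightarrow> x \<in> Vn n \<Longrightarrow> g x = g' x"
  unfolding restrV_def by (drule fun_cong[of _ _ x]) auto

lemma restrV_apply: "x \<in> Vn n \<Longrightarrow> restrV n g x = g x"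
  by (simp add: restrV_def)

lemma bent_Wal: "bent n g \<longleftrightarrow> (\<forall>u\<in>Vn n. \<bar>real_of_int (Wal n g (ip n u))\<bar> = 2 powr (real n / 2))"
  unfolding bent_def Wal_def by simp

lemma A_char: "xor_coset n (a m) (span2 n a {..<m}) = {restrV n (gS a m S) | S. S \<subseteq> {..<m}}"
proof -
  have e: "restrV n (\<lambda>x. a m x \<noteq> restrV n (\<lambda>x. odd (card {j \<in> S. a j x})) x) = restrV n (gS a m S)" for S
    by (rule ext) (simp add: restrV_def gS_def)
  show ?thesis unfolding xor_coset_def span2_def
  proof (intro set_eqI iffI)
    fix g assume "g \<in> {restrV n (\<lambda>x. a m x \<noteq> h x) |h. h \<in> {restrV n (\<lambda>x. odd (card {j \<in> S. a j x})) |S. S \<subseteq> {..<m}}}"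
    then obtain S where "S \<subseteq> {..<m}" "g = restrV n (\<lambda>x. a m x \<noteq> restrV n (\<lambda>x. odd (card {j \<in> S. a j x})) x)"
      by blast
    thus "g \<in> {restrV n (gS a m S) |S. S \<subseteq> {..<m}}" using e by blast
  next
    fix g assume "g \<in> {restrV n (gS a m S) |S. S \<subseteq> {..<m}}"
    then obtain S where S: "S \<subseteq> {..<m}" "g = restrV n (gS a m S)" by blast
    hence "g = restrV n (\<lambda>x. a m x \<noteq> restrV n (\<lambda>x. odd (card {j \<in> S. a j x})) x)" using e[of S] by simp
    thus "g \<in> {restrV n (\<lambda>x. a m x \<noteq> h x) |h. h \<in> {restrV n (\<lambda>x. odd (card {j \<in> S. a j x})) |S. S \<subseteq> {..<m}}}"
      using S(1) by blast
  qed
qed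

lemma maj_pm: "2 * (-1::int) ^ of_bool (((p \<and> q) \<noteq> ((p \<and> r) \<noteq> (q \<and> r))) \<noteq> l)
  = (-1) ^ of_bool (p \<noteq> l) + (-1) ^ of_bool (q \<noteq> l) + (-1) ^ of_bool (r \<noteq> l) - (-1) ^ of_bool ((p \<noteq> (q \<noteq> r)) \<noteq> l)"
  by (cases p; cases q; cases r; cases l) simp_all

lemma Wal_maj: "2 * Wal n (\<lambda>x. (g1 x \<and> g2 x) \<noteq> ((g1 x \<and> g3 x) \<noteq> (g2 x \<and> g3 x))) L
  = Wal n g1 L + Wal n g2 L + Wal n g3 L - Wal n (\<lambda>x. g1 x \<noteq> (g2 x \<noteq> g3 x)) L"
proof -
  have "2 * Wal n (\<lambda>x. (g1 x \<and> g2 x) \<noteq> ((g1 x \<and> g3 x) \<noteq> (g2 x \<and> g3 x))) L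
      = (\<Sum>x\<in>Vn n. 2 * (-1::int) ^ of_bool (((g1 x \<and> g2 x) \<noteq> ((g1 x \<and> g3 x) \<noteq> (g2 x \<and> g3 x))) \<noteq> L x))"
    unfolding Wal_def by (rule sum_distrib_left)
  also have "... = (\<Sum>x\<in>Vn n. (-1) ^ of_bool (g1 x \<noteq> L x) + (-1) ^ of_bool (g2 x \<noteq> L x) + (-1) ^ of_bool (g3 x \<noteq> L x) - (-1) ^ of_bool ((g1 x \<noteq> (g2 x \<noteq> g3 x)) \<noteq> L x))"
    by (rule sum.cong[OF refl], rule maj_pm)
  also have "... = Wal n g1 L + Wal n g2 L + Wal n g3 L - Wal n (\<lambda>x. g1 x \<noteq> (g2 x \<noteq> g3 x)) L"
    unfolding Wal_def by (simp only: sum.distrib sum_subtractf)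
  finally show ?thesis .
qed

lemma filter_sd: "{j \<in> sd A B. P j} = sd {j \<in> A. P j} {j \<in> B. P j}"
  by (auto simp: sd_def)

lemma gS_sd:
  assumes "finite S1" "finite S2" "finite S3"
  shows "gS a m (sd (sd S1 S2) S3) x = (gS a m S1 x \<noteq> (gS a m S2 x \<noteq> gS a m S3 x))"
proof -
  have f: "finite {j \<in> S1. a j x}" "finite {j \<in> S2. a j x}" "finite {j \<in> S3. a j x}"
    "finite (sd {j \<in> S1. a j x} {j \<in> S2. a j x})" using assms by (auto simp: sd_def)
  show ?thesis unfolding gS_def filter_sd odd_card_sd[OF f(4) f(3)] odd_card_sd[OF f(1) f(2)] by auto
qed

lemma abs_from_sq: fixes e :: int assumes "e^2 = 2^(2*h)" shows "\<bar>e\<bar> = 2^h"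
proof -
  have "\<bar>e\<bar>^2 = (2^h)^2" using assms by (simp add: power_mult[symmetric] mult.commute)
  thus ?thesis by (rule power2_eq_imp_eq) simp_all
qed

lemma abs_real_int: "\<bar>real_of_int w\<bar> = 2^h \<longleftrightarrow> \<bar>w\<bar> = 2^h"
proof -
  have "\<bar>real_of_int w\<bar> = real_of_int \<bar>w\<bar>" by simp
  moreover have "(2::real)^h = real_of_int (2^h)" by simp
  ultimately show ?thesis by (metis of_int_eq_iff)
qed

lemma abs_real_int2: "\<bar>real_of_int w\<bar> = 2^h \<longleftrightarrow> \<bar>2 * w\<bar> = 2 * 2^h"
  unfolding abs_real_int by (simp add: abs_mult)

lemma Wal_restr: "Wal n (restrV n g) L = Wal n g L"
  by (rule Wal_cong) (simp add: restrV_apply)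

theorem corollary2:
  fixes n k :: nat and a :: "nat \<Rightarrow> (nat \<Rightarrow> bool) \<Rightarrow> bool"
  assumes "even n" and "k \<ge> 2"
  shows "gbent n k (\<lambda>x. \<Sum>j<k. 2 ^ j * of_bool (a j x)) \<longleftrightarrow>
    (let A = xor_coset n (a (k - 1)) (span2 n a {..<k - 1}) in
      (\<forall>g\<in>A. bent n g) \<and>
      (\<forall>gi\<in>A. \<forall>gj\<in>A. \<forall>gl\<in>A. gi \<noteq> gj \<and> gi \<noteq> gl \<and> gj \<noteq> gl \<longrightarrow>
         bent n (\<lambda>x. (gi x \<and> gj x) \<noteq> ((gi x \<and> gl x) \<noteq> (gj x \<and> gl x)))))"
proof -
  obtain m where km: "k = Suc m" using assms(2) by (cases k) auto
  hence m: "k - 1 = m" by simp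
  obtain nh where nh: "n = 2 * nh" using assms(1) by blast
  have hh: "2 powr (real n / 2) = (2::real) ^ nh" by (simp add: nh powr_realpow)
  define v where "v = (\<lambda>u S. Wal n (gS a m S) (ip n u))"
  define N where "N = (\<lambda>u. NY a m n (ip n u))"
  have gb: "gbent n k (\<lambda>x. \<Sum>j<k. 2 ^ j * of_bool (a j x)) \<longleftrightarrow>
      (\<forall>u\<in>Vn n. cmod (\<Sum>Y\<in>Pow {..<m}. zeta m ^ sY Y * of_int (N u Y)) = 2 ^ nh)"
    unfolding gbent_def km hh N_def G1 by simp
  have bentA: "bent n (restrV n (gS a m S)) \<longleftrightarrow> (\<forall>u\<in>Vn n. \<bar>v u S\<bar> = 2^nh)" for S
  proof -
    show ?thesis unfolding bent_Wal Wal_restr hh v_def abs_real_int ..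
  qed
  have bentM: "bent n (\<lambda>x. (restrV n (gS a m S1) x \<and> restrV n (gS a m S2) x) \<noteq>
        ((restrV n (gS a m S1) x \<and> restrV n (gS a m S3) x) \<noteq> (restrV n (gS a m S2) x \<and> restrV n (gS a m S3) x)))
     \<longleftrightarrow> (\<forall>u\<in>Vn n. \<bar>v u S1 + v u S2 + v u S3 - v u (sd (sd S1 S2) S3)\<bar> = 2 * 2^nh)"
    if S: "S1 \<subseteq> {..<m}" "S2 \<subseteq> {..<m}" "S3 \<subseteq> {..<m}" for S1 S2 S3
  proof -
    have fin: "finite S1" "finite S2" "finite S3" using S by (auto intro: finite_subset[of _ "{..<m}"])
    define g where "g = (\<lambda>S. restrV n (gS a m S))"
    have w: "2 * Wal n (\<lambda>x. (g S1 x \<and> g S2 x) \<noteq> ((g S1 x \<and> g S3 x) \<noteq> (g S2 x \<and> g S3 x))) (ip n u)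
         = v u S1 + v u S2 + v u S3 - v u (sd (sd S1 S2) S3)" for u
    proof -
      have "Wal n (\<lambda>x. g S1 x \<noteq> (g S2 x \<noteq> g S3 x)) (ip n u) = v u (sd (sd S1 S2) S3)"
        unfolding v_def by (rule Wal_cong) (simp add: g_def restrV_apply gS_sd[OF fin])
      thus ?thesis unfolding Wal_maj by (simp add: g_def Wal_restr v_def)
    qed
    have "bent n (\<lambda>x. (g S1 x \<and> g S2 x) \<noteq> ((g S1 x \<and> g S3 x) \<noteq> (g S2 x \<and> g S3 x)))
      \<longleftrightarrow> (\<forall>u\<in>Vn n. \<bar>v u S1 + v u S2 + v u S3 - v u (sd (sd S1 S2) S3)\<bar> = 2 * 2^nh)"
      unfolding bent_Wal hh abs_real_int2 w ..
    thus ?thesis by (simp only: g_def)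
  qed
  show ?thesis unfolding Let_def m A_char gb
  proof
    assume G: "\<forall>u\<in>Vn n. cmod (\<Sum>Y\<in>Pow {..<m}. zeta m ^ sY Y * of_int (N u Y)) = 2 ^ nh"
    have key: "\<exists>e. \<bar>e\<bar> = 2^nh \<and> (\<exists>Y0. \<forall>S\<subseteq>{..<m}. v u S = e * chi S Y0)" if u: "u \<in> Vn n" for u
    proof -
      obtain Y0 e where Y0: "Y0 \<subseteq> {..<m}" "e^2 = 2^(2*nh)" "\<forall>Y\<subseteq>{..<m}. N u Y = (if Y = Y0 then e else 0)"
        using onlyif_core[OF G[rule_format, OF u]] by blast
      have "v u S = e * chi S Y0" if S: "S \<subseteq> {..<m}" for S
      proof -
        have "v u S = (\<Sum>Y\<in>Pow {..<m}. chi S Y * N u Y)" unfolding v_def N_def by (rule G2[OF S])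
        also have "... = (\<Sum>Y\<in>Pow {..<m}. if Y = Y0 then chi S Y0 * e else 0)"
          using Y0(3) by (intro sum.cong refl) auto
        also have "... = e * chi S Y0" using Y0(1) by simp
        finally show ?thesis .
      qed
      thus ?thesis using abs_from_sq[OF Y0(2)] by blast
    qed
    have absv: "\<bar>v u S\<bar> = 2^nh" if uu: "u \<in> Vn n" and SS: "S \<subseteq> {..<m}" for u S
    proof -
      obtain e Y0 where e: "\<bar>e\<bar> = 2^nh" "\<forall>S\<subseteq>{..<m}. v u S = e * chi S Y0" using key uu by blast
      show ?thesis using e chi_pm[of S Y0] SS by (auto simp: abs_mult)
    qed
    show "(\<forall>g\<in>{restrV n (gS a m S) |S. S \<subseteq> {..<m}}. bent n g) \<and>
      (\<forall>gi\<in>{restrV n (gS a m S) |S. S \<subseteq> {..<m}}. \<forall>gj\<in>{restrV n (gS a m S) |S. S \<subseteq> {..<m}}.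
        \<forall>gl\<in>{restrV n (gS a m S) |S. S \<subseteq> {..<m}}. gi \<noteq> gj \<and> gi \<noteq> gl \<and> gj \<noteq> gl \<longrightarrow>
         bent n (\<lambda>x. (gi x \<and> gj x) \<noteq> ((gi x \<and> gl x) \<noteq> (gj x \<and> gl x))))"
    proof (intro conjI ballI impI)
      fix g assume "g \<in> {restrV n (gS a m S) |S. S \<subseteq> {..<m}}"
      then obtain S where S: "S \<subseteq> {..<m}" "g = restrV n (gS a m S)" by blast
      show "bent n g" unfolding S(2) bentA using absv S(1) by blast
    next
      fix gi gj gl
      assume "gi \<in> {restrV n (gS a m S) |S. S \<subseteq> {..<m}}" "gj \<in> {restrV n (gS a m S) |S. S \<subseteq> {..<m}}"
        "gl \<in> {restrV n (gS a m S) |S. S \<subseteq> {..<m}}"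
      then obtain S1 S2 S3 where S: "S1 \<subseteq> {..<m}" "S2 \<subseteq> {..<m}" "S3 \<subseteq> {..<m}"
        and g: "gi = restrV n (gS a m S1)" "gj = restrV n (gS a m S2)" "gl = restrV n (gS a m S3)" by blast
      have fin: "finite S1" "finite S2" "finite S3" using S by (auto intro: finite_subset[of _ "{..<m}"])
      show "bent n (\<lambda>x. (gi x \<and> gj x) \<noteq> ((gi x \<and> gl x) \<noteq> (gj x \<and> gl x)))"
        unfolding g bentM[OF S]
      proof
        fix u assume u: "u \<in> Vn n"
        obtain e Y0 where e: "\<bar>e\<bar> = 2^nh" "\<forall>S\<subseteq>{..<m}. v u S = e * chi S Y0" using key u by blast
        have s4: "sd (sd S1 S2) S3 \<subseteq> {..<m}" using S by (auto simp: sd_def)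
        have c4: "chi (sd (sd S1 S2) S3) Y0 = chi S1 Y0 * chi S2 Y0 * chi S3 Y0"
        proof -
          have f12: "finite (sd S1 S2)" using fin by (simp add: sd_def)
          show ?thesis by (simp add: chi_sd_left[OF f12 fin(3)] chi_sd_left[OF fin(1) fin(2)])
        qed
        have "\<bar>chi S1 Y0 + chi S2 Y0 + chi S3 Y0 - chi (sd (sd S1 S2) S3) Y0\<bar> = 2"
        proof -
          have p4: "chi S1 Y0 * chi S2 Y0 * chi S3 Y0 = 1 \<or> chi S1 Y0 * chi S2 Y0 * chi S3 Y0 = -1"
            using chi_pm[of "sd (sd S1 S2) S3" Y0] c4 by simp
          show ?thesis unfolding c4 using pm1_triple[OF chi_pm[of S1 Y0] chi_pm[of S2 Y0] chi_pm[of S3 Y0] p4] by simp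
        qed
        moreover have "v u S1 + v u S2 + v u S3 - v u (sd (sd S1 S2) S3)
             = e * (chi S1 Y0 + chi S2 Y0 + chi S3 Y0 - chi (sd (sd S1 S2) S3) Y0)"
          using e(2) S s4 by (simp add: algebra_simps)
        ultimately show "\<bar>v u S1 + v u S2 + v u S3 - v u (sd (sd S1 S2) S3)\<bar> = 2 * 2^nh"
          using e(1) by (simp add: abs_mult)
      qed
    qed
  next
    assume H: "(\<forall>g\<in>{restrV n (gS a m S) |S. S \<subseteq> {..<m}}. bent n g) \<and>
      (\<forall>gi\<in>{restrV n (gS a m S) |S. S \<subseteq> {..<m}}. \<forall>gj\<in>{restrV n (gS a m S) |S. S \<subseteq> {..<m}}.
        \<forall>gl\<in>{restrV n (gS a m S) |S. S \<subseteq> {..<m}}. gi \<noteq> gj \<and> gi \<noteq> gl \<and> gj \<noteq> gl \<longrightarrow>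
         bent n (\<lambda>x. (gi x \<and> gj x) \<noteq> ((gi x \<and> gl x) \<noteq> (gj x \<and> gl x))))"
    have absv: "\<bar>v u S\<bar> = 2^nh" if "u \<in> Vn n" "S \<subseteq> {..<m}" for u S
    proof -
      have "bent n (restrV n (gS a m S))" using H that(2) by blast
      thus ?thesis unfolding bentA using that(1) by blast
    qed
    show "\<forall>u\<in>Vn n. cmod (\<Sum>Y\<in>Pow {..<m}. zeta m ^ sY Y * of_int (N u Y)) = 2 ^ nh"
    proof
      fix u assume u: "u \<in> Vn n"
      show "cmod (\<Sum>Y\<in>Pow {..<m}. zeta m ^ sY Y * of_int (N u Y)) = 2 ^ nh"
      proof (rule if_core[where v = "v u"])
        fix S assume "S \<subseteq> {..<m}"
        thus "v u S = (\<Sum>Y\<in>Pow {..<m}. chi S Y * N u Y)" unfolding v_def N_def by (rule G2)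
      next
        fix S assume "S \<subseteq> {..<m}"
        thus "\<bar>v u S\<bar> = 2^nh" using absv u by blast
      next
        fix S1 S2 S3 assume S: "S1 \<subseteq> {..<m}" "S2 \<subseteq> {..<m}" "S3 \<subseteq> {..<m}"
        have fin: "finite S1" "finite S2" "finite S3" using S by (auto intro: finite_subset[of _ "{..<m}"])
        define g where "g = (\<lambda>S. restrV n (gS a m S))"
        have same: "v u S = v u T" if "g S = g T" for S T
          unfolding v_def by (rule Wal_cong) (use restrV_eqD[OF that[unfolded g_def]] in blast)
        have v4: "v u (sd (sd S1 S2) S3) = Wal n (\<lambda>x. gS a m S1 x \<noteq> (gS a m S2 x \<noteq> gS a m S3 x)) (ip n u)"
          unfolding v_def by (rule Wal_cong) (simp add: gS_sd[OF fin])
        show "\<bar>v u S1 + v u S2 + v u S3 - v u (sd (sd S1 S2) S3)\<bar> = 2 * 2^nh"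
        proof (cases "g S1 \<noteq> g S2 \<and> g S1 \<noteq> g S3 \<and> g S2 \<noteq> g S3")
          case True
          hence "bent n (\<lambda>x. (g S1 x \<and> g S2 x) \<noteq> ((g S1 x \<and> g S3 x) \<noteq> (g S2 x \<and> g S3 x)))"
            using H S unfolding g_def by blast
          thus ?thesis using bentM[OF S] u unfolding g_def by blast
        next
          case False
          have a1: "\<bar>v u S1\<bar> = 2^nh" "\<bar>v u S2\<bar> = 2^nh" "\<bar>v u S3\<bar> = 2^nh" using absv u S by auto
          show ?thesis
          proof (cases "g S1 = g S2")
            case True
            have "v u (sd (sd S1 S2) S3) = v u S3" unfolding v4 v_def
              by (rule Wal_cong) (use restrV_eqD[OF True[unfolded g_def]] in \<open>auto simp add: gS_sd[OF fin]\<close>)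
            thus ?thesis using same[OF True] a1 by simp
          next
            case F1: False
            show ?thesis
            proof (cases "g S1 = g S3")
              case True
              have "v u (sd (sd S1 S2) S3) = v u S2" unfolding v4 v_def
                by (rule Wal_cong) (use restrV_eqD[OF True[unfolded g_def]] in \<open>auto simp add: gS_sd[OF fin]\<close>)
              thus ?thesis using same[OF True] a1 by simp
            next
              case F2: False
              hence True: "g S2 = g S3" using False F1 by blast
              have "v u (sd (sd S1 S2) S3) = v u S1" unfolding v4 v_def
                by (rule Wal_cong) (use restrV_eqD[OF True[unfolded g_def]] in \<open>auto simp add: gS_sd[OF fin]\<close>)
              thus ?thesis using same[OF True] a1 by simp
            qed
          qed
        qed
      qed
    qed
  qed
qed

end
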